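(* Let $\hbar>0$ and work on $L^2(\mathbb{R})$ with $\widehat{x}$ the multiplication operator by $x$ and $\widehat{p}=(\hbar/i)\,d/dx$. Define the operator $$F=S\,(L+X^{-1}R)\,(E_p+Y^{-1/2}O_p)=(E_x+X^{-1/2}O_x)\,(B+Y^{-1}T)\,S,$$ where all operators are as described in the context. Then $F$ is a unitary operator on $L^2(\mathbb{R})$.
   Context: For real $s$, $X^{s}=e^{is\widehat{x}/\hbar}$ and $Y^{s}=e^{is\widehat{p}/\hbar}$ (so $X=e^{i\widehat x/\hbar}$, $Y=e^{i\widehat p/\hbar}$). $S=\exp\!\big(-\tfrac{i\log 2}{2\hbar}(\widehat{x}\widehat{p}+\widehat{p}\widehat{x})\big)$, so that $S^\dagger\widehat x S=2\widehat x$ and $S^\dagger \widehat p S=\widehat p/2$. Position projections (multiplication by indicator functions): $L$ onto $x\in[0,1/2)+\mathbb{Z}$, $R$ onto $x\in[1/2,1)+\mathbb{Z}$, $E_x$ onto $x\in[0,1)+2\mathbb{Z}$, $O_x$ onto $x\in[1,2)+2\mathbb{Z}$. Momentum projections (spectral projections of $\widehat p$, i.e. $\int_A |p\rangle\langle p|\,dp$ with $\langle x|p\rangle=e^{ipx/\hbar}/\sqrt{2\pi\hbar}$): $B$ onto $p\in[0,1/2)+\mathbb{Z}$, $T$ onto $p\in[1/2,1)+\mathbb{Z}$, $E_p$ onto $p\in[0,1)+2\mathbb{Z}$, $O_p$ onto $p\in[1,2)+2\mathbb{Z}$. *)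

theory Defs
  imports "HOL-Analysis.Analysis"
begin

type_synonym wf = "real \<Rightarrow> complex"
type_synonym op = "wf \<Rightarrow> wf"

text \<open>Square-integrable functions (representatives of elements of L2(R)).\<close>
definition sq_int :: "wf \<Rightarrow> bool" where
  "sq_int f \<longleftrightarrow> f \<in> borel_measurable lborel \<and> integrable lborel (\<lambda>x. (cmod (f x))\<^sup>2)"

definition l2norm :: "wf \<Rightarrow> real" where
  "l2norm f = sqrt (integral\<^sup>L lborel (\<lambda>x. (cmod (f x))\<^sup>2))"

definition unitary_L2 :: "op \<Rightarrow> bool" where
  "unitary_L2 U \<longleftrightarrow>
     (\<forall>f. sq_int f \<longrightarrow> sq_int (U f)) \<and>
     (\<forall>f g. sq_int f \<longrightarrow> sq_int g \<longrightarrow> (AE x in lborel. f x = g x) \<longrightarrow>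
        (AE x in lborel. U f x = U g x)) \<and>
     (\<forall>f g a b. sq_int f \<longrightarrow> sq_int g \<longrightarrow>
        (AE x in lborel. U (\<lambda>y. a * f y + b * g y) x = a * U f x + b * U g x)) \<and>
     (\<forall>f. sq_int f \<longrightarrow> l2norm (U f) = l2norm f) \<and>
     (\<forall>g. sq_int g \<longrightarrow> (\<exists>f. sq_int f \<and> (AE x in lborel. U f x = g x)))"

definition ft_trunc :: "real \<Rightarrow> real \<Rightarrow> wf \<Rightarrow> real \<Rightarrow> real \<Rightarrow> complex" where
  "ft_trunc sg hbar f n p =
     (LINT x|lborel. indicator {-n..n} x * (exp (\<i> * of_real (sg * p * x / hbar)) * f x))
       / of_real (sqrt (2 * pi * hbar))"

text \<open>Plancherel (L2) transform: L2-limit of truncated transforms.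
  sg = -1: position to momentum representation (psi~(p) = <p|psi>); sg = 1: inverse.\<close>
definition plancherel :: "real \<Rightarrow> real \<Rightarrow> wf \<Rightarrow> wf" where
  "plancherel sg hbar f = (SOME h. sq_int h \<and>
     (\<lambda>n. LINT p|lborel. (cmod (h p - ft_trunc sg hbar f (real n) p))\<^sup>2) \<longlonglongrightarrow> 0)"

text \<open>Functional calculus of the momentum operator: g(p-hat).\<close>
definition mom_fun :: "real \<Rightarrow> (real \<Rightarrow> complex) \<Rightarrow> op" where
  "mom_fun hbar g f = plancherel 1 hbar (\<lambda>p. g p * plancherel (-1) hbar f p)"

definition pos_fun :: "(real \<Rightarrow> complex) \<Rightarrow> op" where
  "pos_fun g f = (\<lambda>x. g x * f x)"

definition Xpow :: "real \<Rightarrow> real \<Rightarrow> op" where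
  "Xpow hbar s = pos_fun (\<lambda>x. exp (\<i> * of_real (s * x / hbar)))"

definition Ypow :: "real \<Rightarrow> real \<Rightarrow> op" where
  "Ypow hbar s = mom_fun hbar (\<lambda>p. exp (\<i> * of_real (s * p / hbar)))"

text \<open>Dilation S = exp(-i log 2 (xp+px)/(2 hbar)), acting as (S f)(x) = 2^(-1/2) f(x/2).\<close>
definition Sdil :: op where
  "Sdil f = (\<lambda>x. of_real (1 / sqrt 2) * f (x / 2))"

definition op_add :: "op \<Rightarrow> op \<Rightarrow> op" where
  "op_add A B f = (\<lambda>x. A f x + B f x)"

definition setL :: "real set" where "setL = {x. \<exists>k::int. x - of_int k \<in> {0..<1/2}}"
definition setR :: "real set" where "setR = {x. \<exists>k::int. x - of_int k \<in> {1/2..<1}}"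
definition setE :: "real set" where "setE = {x. \<exists>k::int. x - 2 * of_int k \<in> {0..<1}}"
definition setO :: "real set" where "setO = {x. \<exists>k::int. x - 2 * of_int k \<in> {1..<2}}"

definition Lp :: op where "Lp = pos_fun (indicator setL)"
definition Rp :: op where "Rp = pos_fun (indicator setR)"
definition Epos :: op where "Epos = pos_fun (indicator setE)"
definition Opos :: op where "Opos = pos_fun (indicator setO)"
definition Bm :: "real \<Rightarrow> op" where "Bm hbar = mom_fun hbar (indicator setL)"
definition Tm :: "real \<Rightarrow> op" where "Tm hbar = mom_fun hbar (indicator setR)"
definition Ep :: "real \<Rightarrow> op" where "Ep hbar = mom_fun hbar (indicator setE)"
definition Op :: "real \<Rightarrow> op" where "Op hbar = mom_fun hbar (indicator setO)"

end

theory Submission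
  imports Defs "HOL-Probability.Probability"
begin


lemma setL_iff: "x \<in> setL \<longleftrightarrow> frac x < 1/2"
proof
  assume "x \<in> setL"
  then obtain k :: int where k: "0 \<le> x - k" "x - k < 1/2" unfolding setL_def by auto
  then have "floor x = k" by (intro floor_unique) auto
  then show "frac x < 1/2" using k by (simp add: frac_def)
next
  assume "frac x < 1/2"
  then show "x \<in> setL" unfolding setL_def frac_def
    by (intro CollectI exI[of _ "floor x"]) auto
qed

lemma setR_iff: "x \<in> setR \<longleftrightarrow> \<not> frac x < 1/2"
proof
  assume "x \<in> setR"
  then obtain k :: int where k: "1/2 \<le> x - k" "x - k < 1" unfolding setR_def by auto
  then have "floor x = k" by (intro floor_unique) auto
  then show "\<not> frac x < 1/2" using k by (simp add: frac_def)
next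
  assume "\<not> frac x < 1/2"
  then show "x \<in> setR" unfolding setR_def frac_def
    by (intro CollectI exI[of _ "floor x"]) (auto simp: frac_lt_1[unfolded frac_def])
qed

lemma setE_iff: "x \<in> setE \<longleftrightarrow> (x/2) \<in> setL"
  unfolding setE_def setL_def by (auto simp: field_simps)

lemma setO_iff: "x \<in> setO \<longleftrightarrow> (x/2) \<in> setR"
  unfolding setO_def setR_def by (auto simp: field_simps)

lemma indL_half: "indicator setL (x/2) = (indicator setE x :: 'a::zero_neq_one)"
  by (simp add: indicator_def setE_iff)
lemma indR_half: "indicator setR (x/2) = (indicator setO x :: 'a::zero_neq_one)"
  by (simp add: indicator_def setO_iff)

lemma frac_meas[measurable]: "(frac :: real \<Rightarrow> real) \<in> borel_measurable borel"
proof -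
  have "frac = (\<lambda>x::real. x - real_of_int \<lfloor>x\<rfloor>)" by (auto simp: frac_def)
  moreover have "(\<lambda>x::real. x - real_of_int \<lfloor>x\<rfloor>) \<in> borel_measurable borel"
    by (intro borel_measurable_diff borel_measurable_real_floor) auto
  ultimately show ?thesis by simp
qed

lemma setL_sets[measurable]: "setL \<in> sets borel"
proof -
  have "setL = {x. frac x < 1/2}" using setL_iff by auto
  also have "\<dots> \<in> sets borel" by measurable
  finally show ?thesis .
qed
lemma setR_sets[measurable]: "setR \<in> sets borel"
proof -
  have "setR = {x. \<not> frac x < 1/2}" using setR_iff by auto
  also have "\<dots> \<in> sets borel" by measurable
  finally show ?thesis .
qed
lemma setE_sets[measurable]: "setE \<in> sets borel"
proof -
  have "setE = {x. frac (x/2) < 1/2}" using setE_iff setL_iff by auto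
  also have "\<dots> \<in> sets borel" by measurable
  finally show ?thesis .
qed
lemma setO_sets[measurable]: "setO \<in> sets borel"
proof -
  have "setO = {x. \<not> frac (x/2) < 1/2}" using setO_iff setR_iff by auto
  also have "\<dots> \<in> sets borel" by measurable
  finally show ?thesis .
qed

lemma LR_part: "indicator setL x + indicator setR x = (1::'a::comm_ring_1)"
  "indicator setL x * indicator setR x = (0::'a::comm_ring_1)"
  by (auto simp: indicator_def setL_iff setR_iff)
lemma EO_part: "indicator setE x + indicator setO x = (1::'a::comm_ring_1)"
  "indicator setE x * indicator setO x = (0::'a::comm_ring_1)"
  by (auto simp: indicator_def setE_iff setO_iff setL_iff setR_iff)


section \<open>Real inequalities\<close>

lemma inf_lemma1:
  fixes X Y Z :: real
  assumes X: "X \<ge> 0" and Y: "Y \<ge> 0" and H: "\<And>d. d > 0 \<Longrightarrow> Z \<le> d * X + Y / d"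
  shows "Z \<le> 2 * sqrt X * sqrt Y"
proof (cases "X > 0 \<and> Y > 0")
  case True
  define d where "d = sqrt Y / sqrt X"
  have d: "d > 0" using True by (simp add: d_def)
  have sX: "sqrt X * sqrt X = X" and sY: "sqrt Y * sqrt Y = Y" using X Y by auto
  have pX: "sqrt X > 0" using True by simp
  have "d * X = sqrt X * sqrt Y" unfolding d_def using pX
    by (subst sX[symmetric]) (simp add: field_simps)
  moreover have "Y / d = sqrt X * sqrt Y" unfolding d_def using pX True
    by (subst sY[symmetric]) (simp add: field_simps)
  ultimately show ?thesis using H[OF d] by simp
next
  case False
  then have "X = 0 \<or> Y = 0" using X Y by auto
  then show ?thesis
  proof
    assume X0: "X = 0"
    show ?thesis
    proof (rule ccontr)
      assume "\<not> ?thesis"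
      then have Zp: "Z > 0" using X0 by simp
      have "Z \<le> Y / ((Y + 1) * 2 / Z)" using H[of "(Y+1)*2/Z"] X0 Zp Y by simp
      also have "\<dots> = Y * Z / ((Y+1)*2)" by simp
      also have "\<dots> < Z"
      proof -
        have "Y * Z \<ge> 0" using Zp Y by simp
        then have "Y * Z + Z * 2 > 0" using Zp by linarith
        then show ?thesis using Zp Y by (simp add: field_simps)
      qed
      finally show False by simp
    qed
  next
    assume Y0: "Y = 0"
    show ?thesis
    proof (rule ccontr)
      assume "\<not> ?thesis"
      then have Zp: "Z > 0" using Y0 by simp
      have "Z \<le> (Z / ((X + 1) * 2)) * X" using H[of "Z/((X+1)*2)"] Y0 Zp X by simp
      also have "\<dots> < Z"
      proof -
        have "X * Z \<ge> 0" using Zp X by simp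
        then have "X * Z + Z * 2 > 0" using Zp by linarith
        then show ?thesis using Zp X by (simp add: field_simps)
      qed
      finally show False by simp
    qed
  qed
qed

lemma cmod_add_sq_le:
  fixes a b :: complex and d :: real
  assumes d: "d > 0"
  shows "(cmod (a + b))\<^sup>2 \<le> (cmod a)\<^sup>2 + (cmod b)\<^sup>2 + (d * (cmod a)\<^sup>2 + (cmod b)\<^sup>2 / d)"
proof -
  let ?x = "cmod a" and ?y = "cmod b"
  have "cmod (a + b) \<le> ?x + ?y" by (rule norm_triangle_ineq)
  then have "(cmod (a + b))\<^sup>2 \<le> (?x + ?y)\<^sup>2" by (intro power_mono) auto
  also have "(?x + ?y)\<^sup>2 \<le> ?x\<^sup>2 + ?y\<^sup>2 + (d * ?x\<^sup>2 + ?y\<^sup>2 / d)"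
  proof -
    have "0 \<le> (d * ?x - ?y)\<^sup>2 / d" using d by simp
    also have "(d * ?x - ?y)\<^sup>2 / d = d * ?x\<^sup>2 + ?y\<^sup>2 / d - 2 * ?x * ?y"
      using d by (simp add: power2_eq_square field_simps)
    finally show ?thesis by (simp add: power2_eq_square algebra_simps)
  qed
  finally show ?thesis .
qed

lemma cmod_add_sq_le2: "(cmod (a + b))\<^sup>2 \<le> 2 * (cmod a)\<^sup>2 + 2 * (cmod b)\<^sup>2"
  using cmod_add_sq_le[of 1 a b] by simp

lemma cmod_mult_le_amgm:
  fixes d :: real assumes d: "d > 0"
  shows "cmod a * cmod b \<le> (d * (cmod a)\<^sup>2 + (cmod b)\<^sup>2 / d) / 2"
proof -
  have "0 \<le> (d * cmod a - cmod b)\<^sup>2 / d" using d by simp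
  also have "(d * cmod a - cmod b)\<^sup>2 / d = d * (cmod a)\<^sup>2 + (cmod b)\<^sup>2 / d - 2 * cmod a * cmod b"
    using d by (simp add: power2_eq_square field_simps)
  finally show ?thesis by simp
qed

section \<open>Basic L2 facts\<close>

definition nsq :: "wf \<Rightarrow> real" where
  "nsq f = (LINT x|lborel. (cmod (f x))\<^sup>2)"

lemma l2norm_nsq: "l2norm f = sqrt (nsq f)"
  by (simp add: l2norm_def nsq_def)

lemma nsq_nonneg: "nsq f \<ge> 0"
  unfolding nsq_def by (intro integral_nonneg_AE) auto

lemma sq_intD[measurable_dest]:
  "sq_int f \<Longrightarrow> f \<in> borel_measurable borel"
  by (simp add: sq_int_def)

lemma sq_intD2: "sq_int f \<Longrightarrow> integrable lborel (\<lambda>x. (cmod (f x))\<^sup>2)"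
  by (simp add: sq_int_def)

lemma sq_intI:
  "f \<in> borel_measurable borel \<Longrightarrow> integrable lborel (\<lambda>x. (cmod (f x))\<^sup>2) \<Longrightarrow> sq_int f"
  by (simp add: sq_int_def)

lemma sq_int_bound:
  assumes "sq_int f" "g \<in> borel_measurable borel" "\<And>x. cmod (g x) \<le> C * cmod (f x)"
  shows "sq_int g"
proof (rule sq_intI)
  show "g \<in> borel_measurable borel" by fact
  have "integrable lborel (\<lambda>x. C\<^sup>2 * (cmod (f x))\<^sup>2)" using sq_intD2[OF assms(1)] by simp
  then show "integrable lborel (\<lambda>x. (cmod (g x))\<^sup>2)"
  proof (rule Bochner_Integration.integrable_bound)
    show "(\<lambda>x. (cmod (g x))\<^sup>2) \<in> borel_measurable lborel" using assms(2) by measurable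
    show "AE x in lborel. norm ((cmod (g x))\<^sup>2) \<le> norm (C\<^sup>2 * (cmod (f x))\<^sup>2)"
    proof (intro AE_I2)
      fix x
      have "cmod (g x) \<le> \<bar>C\<bar> * cmod (f x)" using assms(3)[of x] by (smt (verit) mult_right_mono norm_ge_zero)
      then have "(cmod (g x))\<^sup>2 \<le> (\<bar>C\<bar> * cmod (f x))\<^sup>2" by (intro power_mono) auto
      then show "norm ((cmod (g x))\<^sup>2) \<le> norm (C\<^sup>2 * (cmod (f x))\<^sup>2)"
        by (simp add: power_mult_distrib)
    qed
  qed
qed

lemma sq_int_add:
  assumes f: "sq_int f" and g: "sq_int g"
  shows "sq_int (\<lambda>x. f x + g x)"
proof (rule sq_intI)
  show "(\<lambda>x. f x + g x) \<in> borel_measurable borel" using f g by measurable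
  have "integrable lborel (\<lambda>x. 2 * (cmod (f x))\<^sup>2 + 2 * (cmod (g x))\<^sup>2)"
    using sq_intD2[OF f] sq_intD2[OF g] by simp
  then show "integrable lborel (\<lambda>x. (cmod (f x + g x))\<^sup>2)"
    by (rule Bochner_Integration.integrable_bound) (use f g cmod_add_sq_le2 in auto)
qed

lemma sq_int_cmult: "sq_int f \<Longrightarrow> sq_int (\<lambda>x. a * f x)"
  by (rule sq_int_bound[where C="cmod a"]) (auto simp: norm_mult)

lemma sq_int_uminus: "sq_int f \<Longrightarrow> sq_int (\<lambda>x. - f x)"
  by (rule sq_int_bound[where C=1]) auto

lemma sq_int_diff: "sq_int f \<Longrightarrow> sq_int g \<Longrightarrow> sq_int (\<lambda>x. f x - g x)"
  using sq_int_add[of f "\<lambda>x. - g x"] sq_int_uminus[of g] by simp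

lemma sq_int_zero: "sq_int (\<lambda>x. 0)"
  by (rule sq_intI) auto

lemma sq_int_lin: "sq_int f \<Longrightarrow> sq_int g \<Longrightarrow> sq_int (\<lambda>x. a * f x + b * g x)"
  by (intro sq_int_add sq_int_cmult)

lemma sq_int_mult_bdd:
  assumes "sq_int f" "g \<in> borel_measurable borel" "\<And>x. cmod (g x) \<le> B"
  shows "sq_int (\<lambda>x. g x * f x)"
  by (rule sq_int_bound[where C=B]) (use assms in \<open>auto simp: norm_mult intro!: mult_right_mono\<close>)

lemma sq_int_cong_AE_meas:
  assumes "sq_int f" "g \<in> borel_measurable borel" "AE x in lborel. f x = g x"
  shows "sq_int g"
proof (rule sq_intI)
  show "integrable lborel (\<lambda>x. (cmod (g x))\<^sup>2)"
    using sq_intD2[OF assms(1)] by (rule integrable_cong_AE_imp) (use assms in auto)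
qed fact

lemma nsq_cong_AE:
  assumes "f \<in> borel_measurable borel" "g \<in> borel_measurable borel" "AE x in lborel. f x = g x"
  shows "nsq f = nsq g"
  unfolding nsq_def by (rule integral_cong_AE) (use assms in auto)



lemma meas_cnj[measurable]: "f \<in> borel_measurable M \<Longrightarrow> (\<lambda>x. cnj (f x)) \<in> borel_measurable M"
proof -
  have "(cnj :: complex \<Rightarrow> complex) \<in> borel_measurable borel"
    by (intro borel_measurable_continuous_onI continuous_intros)
  moreover assume "f \<in> borel_measurable M"
  ultimately show ?thesis by (rule measurable_compose[rotated])
qed

lemma nsq_add_le_d:
  assumes f: "sq_int f" and g: "sq_int g" and d: "d > 0"
  shows "nsq (\<lambda>x. f x + g x) \<le> nsq f + nsq g + (d * nsq f + nsq g / d)"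
proof -
  have "nsq (\<lambda>x. f x + g x) \<le> (LINT x|lborel. (cmod (f x))\<^sup>2 + (cmod (g x))\<^sup>2 + (d * (cmod (f x))\<^sup>2 + (cmod (g x))\<^sup>2 / d))"
    unfolding nsq_def
    by (intro integral_mono sq_intD2 sq_int_add f g cmod_add_sq_le d)
       (use sq_intD2[OF f] sq_intD2[OF g] in auto)
  also have "\<dots> = nsq f + nsq g + (d * nsq f + nsq g / d)"
    unfolding nsq_def using sq_intD2[OF f] sq_intD2[OF g] by simp
  finally show ?thesis .
qed

lemma minkowski_sq:
  assumes f: "sq_int f" and g: "sq_int g"
  shows "nsq (\<lambda>x. f x + g x) \<le> (sqrt (nsq f) + sqrt (nsq g))\<^sup>2"
proof -
  have "nsq (\<lambda>x. f x + g x) - nsq f - nsq g \<le> 2 * sqrt (nsq f) * sqrt (nsq g)"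
  proof (rule inf_lemma1[OF nsq_nonneg nsq_nonneg])
    fix d :: real assume "d > 0"
    from nsq_add_le_d[OF f g this]
    show "nsq (\<lambda>x. f x + g x) - nsq f - nsq g \<le> d * nsq f + nsq g / d" by linarith
  qed
  moreover have "(sqrt (nsq f) + sqrt (nsq g))\<^sup>2 = nsq f + nsq g + 2 * sqrt (nsq f) * sqrt (nsq g)"
    using nsq_nonneg[of f] nsq_nonneg[of g] by (simp add: power2_eq_square algebra_simps)
  ultimately show ?thesis by simp
qed

lemma minkowski:
  assumes f: "sq_int f" and g: "sq_int g"
  shows "sqrt (nsq (\<lambda>x. f x + g x)) \<le> sqrt (nsq f) + sqrt (nsq g)"
  using real_sqrt_le_mono[OF minkowski_sq[OF f g]] by (simp add: nsq_nonneg)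

lemma minkowski_diff:
  assumes f: "sq_int f" and g: "sq_int g"
  shows "\<bar>sqrt (nsq f) - sqrt (nsq g)\<bar> \<le> sqrt (nsq (\<lambda>x. f x - g x))"
proof -
  have 1: "sqrt (nsq f) \<le> sqrt (nsq (\<lambda>x. f x - g x)) + sqrt (nsq g)"
    using minkowski[OF sq_int_diff[OF f g] g] by simp
  have "nsq (\<lambda>x. g x - f x) = nsq (\<lambda>x. f x - g x)"
    unfolding nsq_def by (simp add: norm_minus_commute)
  then have 2: "sqrt (nsq g) \<le> sqrt (nsq (\<lambda>x. f x - g x)) + sqrt (nsq f)"
    using minkowski[OF sq_int_diff[OF g f] f] by simp
  show ?thesis using 1 2 by linarith
qed

lemma integrable_prod_norm:
  assumes f: "sq_int f" and g: "sq_int g"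
  shows "integrable lborel (\<lambda>x. cmod (f x) * cmod (g x))"
proof -
  have "integrable lborel (\<lambda>x. (cmod (f x))\<^sup>2 + (cmod (g x))\<^sup>2)"
    using sq_intD2[OF f] sq_intD2[OF g] by simp
  then show ?thesis
  proof (rule Bochner_Integration.integrable_bound)
    show "(\<lambda>x. cmod (f x) * cmod (g x)) \<in> borel_measurable lborel" using f g by measurable
    show "AE x in lborel. norm (cmod (f x) * cmod (g x)) \<le> norm ((cmod (f x))\<^sup>2 + (cmod (g x))\<^sup>2)"
    proof (intro AE_I2)
      fix x
      have "cmod (f x) * cmod (g x) * 2 \<le> (cmod (f x))\<^sup>2 + (cmod (g x))\<^sup>2"
        using cmod_mult_le_amgm[of 1 "f x" "g x"] by simp
      moreover have "(cmod (f x))\<^sup>2 \<ge> 0" "(cmod (g x))\<^sup>2 \<ge> 0" by auto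
      moreover have "cmod (f x) * cmod (g x) \<ge> 0" by simp
      ultimately have "cmod (f x) * cmod (g x) \<le> (cmod (f x))\<^sup>2 + (cmod (g x))\<^sup>2" by linarith
      then show "norm (cmod (f x) * cmod (g x)) \<le> norm ((cmod (f x))\<^sup>2 + (cmod (g x))\<^sup>2)"
        by (simp add: abs_mult)
    qed
  qed
qed

lemma integrable_inner:
  assumes f: "sq_int f" and g: "sq_int g"
  shows "integrable lborel (\<lambda>x. f x * cnj (g x))"
  by (rule Bochner_Integration.integrable_bound[OF integrable_prod_norm[OF f g]])
     (use f g in \<open>auto simp: norm_mult\<close>)

lemma cauchy_schwarz_L2:
  assumes f: "sq_int f" and g: "sq_int g"
  shows "(LINT x|lborel. cmod (f x) * cmod (g x)) \<le> sqrt (nsq f) * sqrt (nsq g)"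
proof -
  have "2 * (LINT x|lborel. cmod (f x) * cmod (g x)) \<le> 2 * sqrt (nsq f) * sqrt (nsq g)"
  proof (rule inf_lemma1[OF nsq_nonneg nsq_nonneg])
    fix d :: real assume d: "d > 0"
    have "(LINT x|lborel. cmod (f x) * cmod (g x)) \<le> (LINT x|lborel. (d * (cmod (f x))\<^sup>2 + (cmod (g x))\<^sup>2 / d) / 2)"
      by (intro integral_mono integrable_prod_norm f g cmod_mult_le_amgm d)
         (use sq_intD2[OF f] sq_intD2[OF g] in auto)
    also have "\<dots> = (d * nsq f + nsq g / d) / 2"
      unfolding nsq_def using sq_intD2[OF f] sq_intD2[OF g] by simp
    finally show "2 * (LINT x|lborel. cmod (f x) * cmod (g x)) \<le> d * nsq f + nsq g / d" by simp
  qed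
  then show ?thesis by simp
qed

lemma inner_bound:
  assumes f: "sq_int f" and g: "sq_int g"
  shows "cmod (CLINT x|lborel. f x * cnj (g x)) \<le> sqrt (nsq f) * sqrt (nsq g)"
proof -
  have "cmod (CLINT x|lborel. f x * cnj (g x)) \<le> (LINT x|lborel. norm (f x * cnj (g x)))"
    by (rule integral_norm_bound)
  also have "\<dots> = (LINT x|lborel. cmod (f x) * cmod (g x))" by (simp add: norm_mult)
  also have "\<dots> \<le> sqrt (nsq f) * sqrt (nsq g)" by (rule cauchy_schwarz_L2[OF f g])
  finally show ?thesis .
qed

definition L2conv :: "(nat \<Rightarrow> wf) \<Rightarrow> wf \<Rightarrow> bool" where
  "L2conv u a \<longleftrightarrow> (\<lambda>n. nsq (\<lambda>x. u n x - a x)) \<longlonglongrightarrow> 0"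

lemma nsq_zero_AE:
  assumes "sq_int f" "nsq f = 0"
  shows "AE x in lborel. f x = 0"
proof -
  have "AE x in lborel. (cmod (f x))\<^sup>2 = 0"
    using assms integral_nonneg_eq_0_iff_AE[OF sq_intD2[OF assms(1)]] unfolding nsq_def by auto
  then show ?thesis by auto
qed

lemma L2_unique:
  assumes u: "\<And>n. sq_int (u n)" and a: "sq_int a" and b: "sq_int b"
    and ua: "L2conv u a" and ub: "L2conv u b"
  shows "AE x in lborel. a x = b x"
proof -
  have le: "nsq (\<lambda>x. a x - b x) \<le> 2 * nsq (\<lambda>x. u n x - a x) + 2 * nsq (\<lambda>x. u n x - b x)" for n
  proof -
    have "nsq (\<lambda>x. a x - b x) \<le> (LINT x|lborel. 2 * (cmod (u n x - a x))\<^sup>2 + 2 * (cmod (u n x - b x))\<^sup>2)"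
      unfolding nsq_def
    proof (intro integral_mono)
      show "integrable lborel (\<lambda>x. (cmod (a x - b x))\<^sup>2)" by (intro sq_intD2 sq_int_diff a b)
      show "integrable lborel (\<lambda>x. 2 * (cmod (u n x - a x))\<^sup>2 + 2 * (cmod (u n x - b x))\<^sup>2)"
        using sq_intD2[OF sq_int_diff[OF u a, of n]] sq_intD2[OF sq_int_diff[OF u b, of n]] by simp
      fix x
      have "a x - b x = (a x - u n x) + (u n x - b x)" by simp
      then have "(cmod (a x - b x))\<^sup>2 \<le> 2 * (cmod (a x - u n x))\<^sup>2 + 2 * (cmod (u n x - b x))\<^sup>2"
        by (metis cmod_add_sq_le2)
      then show "(cmod (a x - b x))\<^sup>2 \<le> 2 * (cmod (u n x - a x))\<^sup>2 + 2 * (cmod (u n x - b x))\<^sup>2"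
        by (simp add: norm_minus_commute)
    qed
    also have "\<dots> = 2 * nsq (\<lambda>x. u n x - a x) + 2 * nsq (\<lambda>x. u n x - b x)"
      unfolding nsq_def
      using sq_intD2[OF sq_int_diff[OF u a, of n]] sq_intD2[OF sq_int_diff[OF u b, of n]] by simp
    finally show ?thesis .
  qed
  have "(\<lambda>n. 2 * nsq (\<lambda>x. u n x - a x) + 2 * nsq (\<lambda>x. u n x - b x)) \<longlonglongrightarrow> 2 * 0 + 2 * 0"
    using ua ub unfolding L2conv_def by (intro tendsto_intros)
  then have "nsq (\<lambda>x. a x - b x) \<le> 0"
    by (intro LIMSEQ_le_const[of _ 0]) (use le in auto)
  then have "nsq (\<lambda>x. a x - b x) = 0" using nsq_nonneg[of "\<lambda>x. a x - b x"] by linarith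
  from nsq_zero_AE[OF sq_int_diff[OF a b] this] show ?thesis by auto
qed

lemma L2_norm_cont:
  assumes u: "\<And>n. sq_int (u n)" and a: "sq_int a" and ua: "L2conv u a"
  shows "(\<lambda>n. nsq (u n)) \<longlonglongrightarrow> nsq a"
proof -
  have 0: "(\<lambda>n. sqrt (nsq (\<lambda>x. u n x - a x))) \<longlonglongrightarrow> 0"
    using tendsto_real_sqrt[OF ua[unfolded L2conv_def]] by simp
  have "(\<lambda>n. sqrt (nsq (u n)) - sqrt (nsq a)) \<longlonglongrightarrow> 0"
    by (rule Lim_null_comparison[OF _ 0]) (use minkowski_diff[OF u a] in auto)
  then have "(\<lambda>n. (sqrt (nsq (u n)) - sqrt (nsq a)) + sqrt (nsq a)) \<longlonglongrightarrow> 0 + sqrt (nsq a)"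
    by (intro tendsto_intros)
  then have "(\<lambda>n. sqrt (nsq (u n))) \<longlonglongrightarrow> sqrt (nsq a)" by simp
  then have "(\<lambda>n. (sqrt (nsq (u n)))^2) \<longlonglongrightarrow> (sqrt (nsq a))^2" by (rule tendsto_power)
  moreover have "(sqrt (nsq f))^2 = nsq f" for f using nsq_nonneg[of f] by simp
  ultimately show ?thesis by simp
qed

lemma L2_inner_cont:
  assumes u: "\<And>n. sq_int (u n)" and a: "sq_int a" and b: "sq_int b" and ua: "L2conv u a"
  shows "(\<lambda>n. CLINT x|lborel. u n x * cnj (b x)) \<longlonglongrightarrow> (CLINT x|lborel. a x * cnj (b x))"
proof -
  have 0: "(\<lambda>n. sqrt (nsq (\<lambda>x. u n x - a x)) * sqrt (nsq b)) \<longlonglongrightarrow> 0 * sqrt (nsq b)"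
    using tendsto_real_sqrt[OF ua[unfolded L2conv_def]] by (intro tendsto_intros) simp
  have eq: "(CLINT x|lborel. u n x * cnj (b x)) - (CLINT x|lborel. a x * cnj (b x))
      = (CLINT x|lborel. (u n x - a x) * cnj (b x))" for n
    using integrable_inner[OF u b, of n] integrable_inner[OF a b]
    by (simp add: left_diff_distrib)
  have "(\<lambda>n. (CLINT x|lborel. u n x * cnj (b x)) - (CLINT x|lborel. a x * cnj (b x))) \<longlonglongrightarrow> 0"
    unfolding eq
    by (rule Lim_null_comparison[OF _ 0[simplified]])
       (use inner_bound[OF sq_int_diff[OF u a] b] in auto)
  then show ?thesis by (simp add: LIM_zero_iff)
qed

lemma L2_inner_cont2:
  assumes u: "\<And>n. sq_int (u n)" and a: "sq_int a" and b: "sq_int b" and ua: "L2conv u a"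
  shows "(\<lambda>n. CLINT x|lborel. b x * cnj (u n x)) \<longlonglongrightarrow> (CLINT x|lborel. b x * cnj (a x))"
proof -
  have "(\<lambda>n. cnj (CLINT x|lborel. u n x * cnj (b x))) \<longlonglongrightarrow> cnj (CLINT x|lborel. a x * cnj (b x))"
    by (intro tendsto_cnj L2_inner_cont assms)
  moreover have "cnj (CLINT x|lborel. f x * cnj (b x)) = (CLINT x|lborel. b x * cnj (f x))" for f
  proof -
    have "(\<lambda>x. b x * cnj (f x)) = (\<lambda>x. cnj (f x * cnj (b x)))" by (auto simp: mult.commute)
    moreover have "(CLINT x|lborel. cnj (f x * cnj (b x))) = cnj (CLINT x|lborel. f x * cnj (b x))"
      by (rule Bochner_Integration.integral_cnj)
    ultimately show ?thesis by simp
  qed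
  ultimately show ?thesis by simp
qed

lemma L2_fatou:
  assumes u: "\<And>n. sq_int (u n)" and a: "a \<in> borel_measurable borel"
    and lim: "AE x in lborel. (\<lambda>n. u n x) \<longlonglongrightarrow> a x"
    and bd: "eventually (\<lambda>n. nsq (u n) \<le> B) sequentially"
  shows "sq_int a \<and> nsq a \<le> B"
proof -
  have "(\<integral>\<^sup>+x. ennreal ((cmod (a x))\<^sup>2) \<partial>lborel) = (\<integral>\<^sup>+x. liminf (\<lambda>n. ennreal ((cmod (u n x))\<^sup>2)) \<partial>lborel)"
  proof (rule nn_integral_cong_AE)
    show "AE x in lborel. ennreal ((cmod (a x))\<^sup>2) = liminf (\<lambda>n. ennreal ((cmod (u n x))\<^sup>2))"
      using lim
    proof eventually_elim
      case (elim x)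
      then have "(\<lambda>n. ennreal ((cmod (u n x))\<^sup>2)) \<longlonglongrightarrow> ennreal ((cmod (a x))\<^sup>2)"
        by (intro tendsto_ennrealI tendsto_intros)
      from lim_imp_Liminf[OF _ this] show ?case by simp
    qed
  qed
  also have "\<dots> \<le> liminf (\<lambda>n. \<integral>\<^sup>+x. ennreal ((cmod (u n x))\<^sup>2) \<partial>lborel)"
    by (rule nn_integral_liminf) (use u in measurable)
  also have "\<dots> = liminf (\<lambda>n. ennreal (nsq (u n)))"
    unfolding nsq_def
    by (subst nn_integral_eq_integral) (use sq_intD2[OF u] in auto)
  also have "\<dots> \<le> ennreal B"
    by (rule Liminf_le) (use bd in \<open>auto elim!: eventually_mono intro: ennreal_leI\<close>)
  finally have le: "(\<integral>\<^sup>+x. ennreal ((cmod (a x))\<^sup>2) \<partial>lborel) \<le> ennreal B" .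
  have int: "integrable lborel (\<lambda>x. (cmod (a x))\<^sup>2)"
  proof (rule integrableI_bounded)
    show "(\<lambda>x. (cmod (a x))\<^sup>2) \<in> borel_measurable lborel" using a by measurable
    show "(\<integral>\<^sup>+x. ennreal (norm ((cmod (a x))\<^sup>2)) \<partial>lborel) < \<infinity>"
      using le by (simp add: le_less_trans)
  qed
  have "ennreal (nsq a) \<le> ennreal B"
    unfolding nsq_def using le by (subst (asm) nn_integral_eq_integral[OF int]) auto
  moreover have "B \<ge> 0"
  proof -
    obtain n where "nsq (u n) \<le> B" using bd by (auto simp: eventually_sequentially)
    then show ?thesis using nsq_nonneg[of "u n"] by linarith
  qed
  ultimately have "nsq a \<le> B" by simp
  then show ?thesis using int a by (simp add: sq_int_def)
qed


lemma nsq_add_le2: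
  assumes f: "sq_int f" and g: "sq_int g"
  shows "nsq (\<lambda>x. f x + g x) \<le> 2 * nsq f + 2 * nsq g"
  using nsq_add_le_d[OF f g, of 1] by simp

lemma nsq_diff_sym: "nsq (\<lambda>x. f x - g x) = nsq (\<lambda>x. g x - f x)"
  unfolding nsq_def by (simp add: norm_minus_commute)

lemma nsq_diff_tri:
  assumes f: "sq_int f" and g: "sq_int g" and h: "sq_int h"
  shows "nsq (\<lambda>x. f x - h x) \<le> 2 * nsq (\<lambda>x. f x - g x) + 2 * nsq (\<lambda>x. g x - h x)"
  using nsq_add_le2[OF sq_int_diff[OF f g] sq_int_diff[OF g h]] by simp

lemma two_d_le: fixes d :: real and k :: nat
  shows "d \<le> (2^k * d\<^sup>2 + (1/2)^k) / 2"
proof -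
  have "0 \<le> (1/2)^k * (2^k * d - 1)\<^sup>2" by simp
  also have "(1/2)^k * (2^k * d - 1)\<^sup>2 = 2^k * d\<^sup>2 + (1/2)^k - 2 * d"
    by (simp add: power2_eq_square field_simps power_mult_distrib[symmetric])
  finally show ?thesis by simp
qed

lemma L2_complete:
  assumes u: "\<And>n. sq_int (u n)"
    and C: "\<And>e. e > 0 \<Longrightarrow> \<exists>N. \<forall>m\<ge>N. \<forall>n\<ge>N. nsq (\<lambda>x. u m x - u n x) < e"
  shows "\<exists>h. sq_int h \<and> L2conv u h"
proof -
  have "\<forall>k::nat. \<exists>N. \<forall>m\<ge>N. \<forall>n\<ge>N. nsq (\<lambda>x. u m x - u n x) < (1/8)^k"
    using C by simp
  then obtain N where N: "\<And>k m n. m \<ge> N k \<Longrightarrow> n \<ge> N k \<Longrightarrow> nsq (\<lambda>x. u m x - u n x) < (1/8)^k"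
    by metis
  define r where "r k = (\<Sum>j\<le>k. N j) + k" for k
  have rN: "r k \<ge> N k" for k
  proof -
    have "N k \<le> (\<Sum>j\<le>k. N j)" by (rule member_le_sum) auto
    then show ?thesis unfolding r_def by simp
  qed
  have rmono: "r k \<le> r j" if "k \<le> j" for k j
    unfolding r_def using that by (intro add_mono sum_mono2) auto
  define v where "v k = u (r k)" for k
  have v: "sq_int (v k)" for k unfolding v_def by (rule u)
  have vbd: "nsq (\<lambda>x. v j x - v k x) < (1/8)^k" if "k \<le> j" for j k
    unfolding v_def using rN[of k] rmono[OF that] by (intro N) auto
  define d where "d k x = cmod (v (Suc k) x - v k x)" for k x
  have dmeas[measurable]: "(\<lambda>x. d k x) \<in> borel_measurable borel" for k
    unfolding d_def using v by measurable
  define T where "T x = (\<Sum>k. ennreal (2^k * (d k x)\<^sup>2))" for x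
  have Tmeas[measurable]: "T \<in> borel_measurable borel" unfolding T_def by measurable
  have "(\<integral>\<^sup>+x. T x \<partial>lborel) = (\<Sum>k. \<integral>\<^sup>+x. ennreal (2^k * (d k x)\<^sup>2) \<partial>lborel)"
    unfolding T_def by (rule nn_integral_suminf) measurable
  also have "\<dots> = (\<Sum>k. ennreal (2^k * nsq (\<lambda>x. v (Suc k) x - v k x)))"
  proof (intro suminf_cong)
    fix k
    have "(\<integral>\<^sup>+x. ennreal (2^k * (d k x)\<^sup>2) \<partial>lborel) = ennreal (LINT x|lborel. 2^k * (d k x)\<^sup>2)"
      by (rule nn_integral_eq_integral)
         (use sq_intD2[OF sq_int_diff[OF v v, of "Suc k" k]] in \<open>auto simp: d_def\<close>)
    also have "\<dots> = ennreal (2^k * nsq (\<lambda>x. v (Suc k) x - v k x))"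
      by (simp add: nsq_def d_def)
    finally show "(\<integral>\<^sup>+x. ennreal (2^k * (d k x)\<^sup>2) \<partial>lborel) = ennreal (2^k * nsq (\<lambda>x. v (Suc k) x - v k x))" .
  qed
  also have "\<dots> \<noteq> top"
  proof (rule ennreal_suminf_neq_top)
    show "0 \<le> 2^k * nsq (\<lambda>x. v (Suc k) x - v k x)" for k by (simp add: nsq_nonneg)
    show "summable (\<lambda>k. 2^k * nsq (\<lambda>x. v (Suc k) x - v k x))"
    proof (rule summable_comparison_test')
      show "summable (\<lambda>k. (1/4::real)^k)" by (rule summable_geometric) simp
      fix k :: nat
      have "2^k * nsq (\<lambda>x. v (Suc k) x - v k x) \<le> 2^k * (1/8)^k"
        using vbd[of k "Suc k"] by (intro mult_left_mono) auto
      also have "(2::real)^k * (1/8)^k = (1/4)^k" by (simp add: power_mult_distrib[symmetric])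
      finally show "norm (2^k * nsq (\<lambda>x. v (Suc k) x - v k x)) \<le> (1/4)^k"
        using nsq_nonneg by simp
    qed
  qed
  finally have AET: "AE x in lborel. T x \<noteq> \<infinity>"
    by (intro nn_integral_PInf_AE) auto
  define G where "G = {x. T x \<noteq> \<infinity>}"
  have Gmeas[measurable]: "G \<in> sets borel" unfolding G_def by measurable
  have AEG: "AE x in lborel. x \<in> G" unfolding G_def using AET by simp
  have conv: "convergent (\<lambda>k. v k x)" if "x \<in> G" for x
  proof -
    have "summable (\<lambda>k. 2^k * (d k x)\<^sup>2)"
      by (rule summable_suminf_not_top) (use that in \<open>auto simp: G_def T_def\<close>)
    then have "summable (\<lambda>k. (2^k * (d k x)\<^sup>2 + (1/2)^k) / 2)"
      by (intro summable_divide summable_add) (auto intro: summable_geometric)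
    then have "summable (\<lambda>k. d k x)"
      by (rule summable_comparison_test') (use two_d_le in \<open>auto simp: d_def\<close>)
    then have "summable (\<lambda>k. v (Suc k) x - v k x)"
      unfolding d_def by (rule summable_norm_cancel)
    then have "(\<lambda>n. \<Sum>k<n. v (Suc k) x - v k x) \<longlonglongrightarrow> (\<Sum>k. v (Suc k) x - v k x)"
      by (rule summable_LIMSEQ)
    then have "(\<lambda>n. v 0 x + (\<Sum>k<n. v (Suc k) x - v k x)) \<longlonglongrightarrow> v 0 x + (\<Sum>k. v (Suc k) x - v k x)"
      by (intro tendsto_intros)
    moreover have "v 0 x + (\<Sum>k<n. v (Suc k) x - v k x) = v n x" for n
      using sum_lessThan_telescope[of "\<lambda>k. v k x" n] by simp
    ultimately show ?thesis unfolding convergent_def by auto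
  qed
  define w where "w k x = indicator G x * v k x" for k x
  have wmeas[measurable]: "w k \<in> borel_measurable borel" for k
    unfolding w_def using v by measurable
  define h where "h x = lim (\<lambda>k. w k x)" for x
  have wconv: "(\<lambda>k. w k x) \<longlonglongrightarrow> h x" for x
  proof (cases "x \<in> G")
    case True
    then have "convergent (\<lambda>k. w k x)" using conv[OF True] by (simp add: w_def)
    then show ?thesis unfolding h_def by (simp add: convergent_LIMSEQ_iff)
  next
    case False
    then have "convergent (\<lambda>k. w k x)" by (simp add: w_def convergent_const)
    then show ?thesis unfolding h_def by (simp add: convergent_LIMSEQ_iff)
  qed
  have hmeas[measurable]: "h \<in> borel_measurable borel"
    by (rule borel_measurable_LIMSEQ_metric[OF wmeas wconv])
  have vlim: "AE x in lborel. (\<lambda>k. v k x) \<longlonglongrightarrow> h x"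
    using AEG
  proof eventually_elim
    case (elim x)
    then show ?case using wconv[of x] by (simp add: w_def)
  qed
  have hk: "sq_int (\<lambda>x. h x - v k x) \<and> nsq (\<lambda>x. h x - v k x) \<le> (1/8)^k" for k
  proof (rule L2_fatou[where u="\<lambda>j x. v (j + k) x - v k x"])
    show "sq_int (\<lambda>x. v (j + k) x - v k x)" for j by (intro sq_int_diff v)
    show "(\<lambda>x. h x - v k x) \<in> borel_measurable borel" using v by measurable
    show "AE x in lborel. (\<lambda>j. v (j + k) x - v k x) \<longlonglongrightarrow> h x - v k x"
      using vlim
    proof eventually_elim
      case (elim x)
      then have "(\<lambda>j. v (j + k) x) \<longlonglongrightarrow> h x" by (rule LIMSEQ_ignore_initial_segment)
      then show ?case by (intro tendsto_intros)
    qed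
    show "eventually (\<lambda>j. nsq (\<lambda>x. v (j + k) x - v k x) \<le> (1/8)^k) sequentially"
      using vbd by (auto intro!: always_eventually less_imp_le)
  qed
  have hsq: "sq_int h"
    using sq_int_add[OF conjunct1[OF hk[of 0]] v[of 0]] by simp
  have "L2conv u h"
    unfolding L2conv_def
  proof (rule LIMSEQ_I)
    fix e :: real assume e: "e > 0"
    obtain k where k: "(1/8::real)^k < e / 4" using real_arch_pow_inv[of "e/4" "1/8"] e by auto
    show "\<exists>no. \<forall>n\<ge>no. norm (nsq (\<lambda>x. u n x - h x) - 0) < e"
    proof (intro exI allI impI)
      fix n assume n: "n \<ge> r k"
      have "nsq (\<lambda>x. u n x - h x) \<le> 2 * nsq (\<lambda>x. u n x - v k x) + 2 * nsq (\<lambda>x. v k x - h x)"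
        by (rule nsq_diff_tri[OF u v hsq])
      also have "nsq (\<lambda>x. v k x - h x) \<le> (1/8)^k"
        using hk[of k] nsq_diff_sym[of h "v k"] by simp
      also have "nsq (\<lambda>x. u n x - v k x) < (1/8)^k"
        unfolding v_def using n rN[of k] by (intro N) auto
      finally have "nsq (\<lambda>x. u n x - h x) < 4 * (1/8)^k" by simp
      then show "norm (nsq (\<lambda>x. u n x - h x) - 0) < e" using k nsq_nonneg by simp
    qed
  qed
  then show ?thesis using hsq by blast
qed


section \<open>Compact support\<close>

definition tr :: "real \<Rightarrow> wf \<Rightarrow> wf" where
  "tr R f x = indicator {-R..R} x * f x"

definition cs :: "wf \<Rightarrow> bool" where
  "cs g \<longleftrightarrow> sq_int g \<and> (\<exists>R. \<forall>x. R < \<bar>x\<bar> \<longrightarrow> g x = 0)"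

lemma tr_meas[measurable]: "f \<in> borel_measurable borel \<Longrightarrow> tr R f \<in> borel_measurable borel"
  unfolding tr_def[abs_def] by measurable

lemma tr_sq_int: "sq_int f \<Longrightarrow> sq_int (tr R f)"
  unfolding tr_def by (rule sq_int_mult_bdd[where B=1]) (auto simp: indicator_def)

lemma tr_cs: "sq_int f \<Longrightarrow> cs (tr R f)"
  unfolding cs_def using tr_sq_int[of f R] by (auto simp: tr_def indicator_def intro!: exI[of _ R])

lemma cs_integrable:
  assumes "cs g" shows "integrable lborel g"
proof -
  obtain R where R: "\<And>x. R < \<bar>x\<bar> \<Longrightarrow> g x = 0" and g: "sq_int g" using assms cs_def by auto
  have "integrable lborel (\<lambda>x. indicator {-R..R} x + (cmod (g x))\<^sup>2 :: real)"
    using sq_intD2[OF g] by (intro Bochner_Integration.integrable_add integrable_real_indicator) (auto simp: emeasure_lborel_Icc_eq)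
  then show ?thesis
  proof (rule Bochner_Integration.integrable_bound)
    show "g \<in> borel_measurable lborel" using g by measurable
    show "AE x in lborel. norm (g x) \<le> norm (indicator {-R..R} x + (cmod (g x))\<^sup>2 :: real)"
    proof (intro AE_I2)
      fix x
      show "norm (g x) \<le> norm (indicator {-R..R} x + (cmod (g x))\<^sup>2 :: real)"
      proof (cases "R < \<bar>x\<bar>")
        case True then show ?thesis using R by simp
      next
        case False
        then have "x \<in> {-R..R}" by auto
        moreover have "cmod (g x) \<le> 1 + (cmod (g x))\<^sup>2"
          by (smt (verit, best) norm_ge_zero power2_eq_square mult_le_cancel_left1 zero_le_power2)
        ultimately show ?thesis by simp
      qed
    qed
  qed
qed

lemma cs_diff: "cs f \<Longrightarrow> cs g \<Longrightarrow> cs (\<lambda>x. f x - g x)"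
proof -
  assume f: "cs f" and g: "cs g"
  obtain R1 where R1: "\<And>x. R1 < \<bar>x\<bar> \<Longrightarrow> f x = 0" using f cs_def by auto
  obtain R2 where R2: "\<And>x. R2 < \<bar>x\<bar> \<Longrightarrow> g x = 0" using g cs_def by auto
  show ?thesis unfolding cs_def
    using sq_int_diff[of f g] f g R1 R2 by (auto simp: cs_def intro!: exI[of _ "max R1 R2"])
qed

lemma cs_lin: "cs f \<Longrightarrow> cs g \<Longrightarrow> cs (\<lambda>x. a * f x + b * g x)"
proof -
  assume f: "cs f" and g: "cs g"
  obtain R1 where R1: "\<And>x. R1 < \<bar>x\<bar> \<Longrightarrow> f x = 0" using f cs_def by auto
  obtain R2 where R2: "\<And>x. R2 < \<bar>x\<bar> \<Longrightarrow> g x = 0" using g cs_def by auto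
  show ?thesis unfolding cs_def
    using sq_int_lin[of f g a b] f g R1 R2 by (auto simp: cs_def intro!: exI[of _ "max R1 R2"])
qed

section \<open>Fourier integral\<close>

definition FT :: "real \<Rightarrow> real \<Rightarrow> wf \<Rightarrow> real \<Rightarrow> complex" where
  "FT sg h g p = (CLINT x|lborel. exp (\<i> * of_real (sg * p * x / h)) * g x) / of_real (sqrt (2 * pi * h))"

lemma ft_trunc_FT: "ft_trunc sg h f R = FT sg h (tr R f)"
  unfolding ft_trunc_def FT_def tr_def by (auto simp: mult.left_commute)

lemma kern_meas[measurable]:
  "(\<lambda>(p, x). exp (\<i> * complex_of_real (sg * p * x / h))) \<in> borel_measurable (borel \<Otimes>\<^sub>M borel)"
proof -
  have "continuous_on UNIV (\<lambda>z::real\<times>real. exp (\<i> * complex_of_real (sg / h * (fst z * snd z))))"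
    by (intro continuous_intros)
  moreover have "(\<lambda>z::real\<times>real. exp (\<i> * complex_of_real (sg / h * (fst z * snd z)))) = (\<lambda>z::real\<times>real. exp (\<i> * complex_of_real (sg * fst z * snd z / h)))"
    by (simp add: divide_inverse mult_ac)
  ultimately have "continuous_on UNIV (\<lambda>z::real\<times>real. exp (\<i> * complex_of_real (sg * fst z * snd z / h)))"
    by metis
  then have "(\<lambda>z::real\<times>real. exp (\<i> * complex_of_real (sg * fst z * snd z / h))) \<in> borel_measurable borel"
    by (rule borel_measurable_continuous_onI)
  moreover have "(\<lambda>(p, x). exp (\<i> * complex_of_real (sg * p * x / h))) = (\<lambda>z::real\<times>real. exp (\<i> * complex_of_real (sg * fst z * snd z / h)))"
    by auto
  ultimately show ?thesis unfolding borel_prod by simp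
qed

lemma kern_norm[simp]: "cmod (exp (\<i> * complex_of_real t)) = 1"
  by simp

lemma FT_meas[measurable]:
  assumes "g \<in> borel_measurable borel"
  shows "FT sg h g \<in> borel_measurable borel"
proof -
  have "(\<lambda>p. CLINT x|lborel. exp (\<i> * of_real (sg * p * x / h)) * g x) \<in> borel_measurable borel"
  proof (rule lborel.borel_measurable_lebesgue_integral[where N=borel and f="\<lambda>p x. exp (\<i> * of_real (sg * p * x / h)) * g x"])
    show "(\<lambda>(p, x). exp (\<i> * complex_of_real (sg * p * x / h)) * g x) \<in> borel_measurable (borel \<Otimes>\<^sub>M lborel)"
      using assms by measurable
  qed
  then show ?thesis unfolding FT_def[abs_def] by measurable
qed


lemma prod_integrable:
  fixes a b :: "real \<Rightarrow> complex"
  assumes a: "integrable lborel a" and b: "integrable lborel b"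
  shows "integrable (lborel \<Otimes>\<^sub>M lborel) (\<lambda>(p, x). b p * a x)"
proof (rule lborel_pair.Fubini_integrable)
  show "(\<lambda>(p, x). b p * a x) \<in> borel_measurable (lborel \<Otimes>\<^sub>M lborel)"
    using a b by measurable
  have "(\<lambda>p. LINT x|lborel. norm (case (p, x) of (p, x) \<Rightarrow> b p * a x)) = (\<lambda>p. norm (b p) * (LINT x|lborel. norm (a x)))"
    by (simp add: norm_mult)
  moreover have "integrable lborel (\<lambda>p. norm (b p) * (LINT x|lborel. norm (a x)))"
    using b by simp
  ultimately show "integrable lborel (\<lambda>p. LINT x|lborel. norm (case (p, x) of (p, x) \<Rightarrow> b p * a x))"
    by simp
  show "AE p in lborel. integrable lborel (\<lambda>x. case (p, x) of (p, x) \<Rightarrow> b p * a x)"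
    using a by simp
qed

lemma fubini_kern:
  fixes a b :: "real \<Rightarrow> complex" and k :: "real \<times> real \<Rightarrow> complex"
  assumes a: "integrable lborel a" and b: "integrable lborel b"
    and k[measurable]: "k \<in> borel_measurable (borel \<Otimes>\<^sub>M borel)" and kb: "\<And>z. cmod (k z) \<le> 1"
  shows "(CLINT p|lborel. b p * (CLINT x|lborel. a x * k (p, x)))
       = (CLINT x|lborel. a x * (CLINT p|lborel. b p * k (p, x)))"
proof -
  define f where "f p x = b p * (a x * k (p, x))" for p x
  have int: "integrable (lborel \<Otimes>\<^sub>M lborel) (case_prod f)"
  proof (rule Bochner_Integration.integrable_bound[OF prod_integrable[OF a b]])
    show "case_prod f \<in> borel_measurable (lborel \<Otimes>\<^sub>M lborel)"
      unfolding f_def using a b by measurable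
    show "AE z in lborel \<Otimes>\<^sub>M lborel. norm (case_prod f z) \<le> norm (case z of (p, x) \<Rightarrow> b p * a x)"
    proof (intro AE_I2)
      fix z :: "real \<times> real"
      obtain p x where z: "z = (p, x)" by (cases z)
      have "cmod (b p) * (cmod (a x) * cmod (k (p, x))) \<le> cmod (b p) * (cmod (a x) * 1)"
        using kb[of "(p, x)"] by (intro mult_left_mono) auto
      then show "norm (case_prod f z) \<le> norm (case z of (p, x) \<Rightarrow> b p * a x)"
        by (simp add: z f_def norm_mult)
    qed
  qed
  have "(CLINT p|lborel. b p * (CLINT x|lborel. a x * k (p, x))) = (CLINT p|lborel. (CLINT x|lborel. f p x))"
    unfolding f_def by (simp add: integral_mult_right_zero)
  also have "\<dots> = (CLINT x|lborel. (CLINT p|lborel. f p x))"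
    using lborel_pair.Fubini_integral[OF int] by simp
  also have "\<dots> = (CLINT x|lborel. a x * (CLINT p|lborel. b p * k (p, x)))"
  proof -
    have "f p x = a x * (b p * k (p, x))" for p x unfolding f_def by (simp add: mult_ac)
    then show ?thesis by (simp add: integral_mult_right_zero)
  qed
  finally show ?thesis .
qed

context
  fixes sg h :: real
  assumes hpos: "h > 0"
begin

lemma FT_lin:
  assumes f: "integrable lborel f" and g: "integrable lborel g"
  shows "FT sg h (\<lambda>x. a * f x + b * g x) p = a * FT sg h f p + b * FT sg h g p"
proof -
  have "(CLINT x|lborel. exp (\<i> * of_real (sg * p * x / h)) * (a * f x + b * g x))
     = (CLINT x|lborel. a * (exp (\<i> * of_real (sg * p * x / h)) * f x) + b * (exp (\<i> * of_real (sg * p * x / h)) * g x))"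
    by (simp add: algebra_simps)
  also have "\<dots> = a * (CLINT x|lborel. exp (\<i> * of_real (sg * p * x / h)) * f x) + b * (CLINT x|lborel. exp (\<i> * of_real (sg * p * x / h)) * g x)"
  proof (subst Bochner_Integration.integral_add)
    have mf: "f \<in> borel_measurable borel" "g \<in> borel_measurable borel" using f g by auto
    have i1: "integrable lborel (\<lambda>x. exp (\<i> * of_real (sg * p * x / h)) * f x)"
      by (rule Bochner_Integration.integrable_bound[OF f]) (use mf in \<open>auto simp: norm_mult\<close>)
    have i2: "integrable lborel (\<lambda>x. exp (\<i> * of_real (sg * p * x / h)) * g x)"
      by (rule Bochner_Integration.integrable_bound[OF g]) (use mf in \<open>auto simp: norm_mult\<close>)
    show "integrable lborel (\<lambda>x. a * (exp (\<i> * of_real (sg * p * x / h)) * f x))" using i1 by simp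
    show "integrable lborel (\<lambda>x. b * (exp (\<i> * of_real (sg * p * x / h)) * g x))" using i2 by simp
  qed (simp add: integral_mult_right_zero)
  finally show ?thesis unfolding FT_def by (simp add: add_divide_distrib)
qed

lemma FT_diff:
  assumes f: "integrable lborel f" and g: "integrable lborel g"
  shows "FT sg h (\<lambda>x. f x - g x) p = FT sg h f p - FT sg h g p"
  using FT_lin[OF f g, of 1 "-1" p] by simp

lemma FT_bound:
  assumes g: "integrable lborel g"
  shows "cmod (FT sg h g p) \<le> (LINT x|lborel. cmod (g x)) / sqrt (2 * pi * h)"
proof -
  have "cmod (CLINT x|lborel. exp (\<i> * of_real (sg * p * x / h)) * g x) \<le> (LINT x|lborel. norm (exp (\<i> * of_real (sg * p * x / h)) * g x))"
    by (rule integral_norm_bound)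
  also have "\<dots> = (LINT x|lborel. cmod (g x))" by (simp add: norm_mult)
  finally show ?thesis unfolding FT_def using hpos by (simp add: norm_divide divide_right_mono)
qed

lemma FT_adjoint:
  assumes a: "integrable lborel a" and b: "integrable lborel b"
  shows "(CLINT p|lborel. FT sg h a p * cnj (b p)) = (CLINT x|lborel. a x * cnj (FT (-sg) h b x))"
proof -
  define c where "c = complex_of_real (sqrt (2 * pi * h))"
  define k where "k = (\<lambda>(p::real, x::real). exp (\<i> * complex_of_real (sg * p * x / h)))"
  have k[measurable]: "k \<in> borel_measurable (borel \<Otimes>\<^sub>M borel)" unfolding k_def by measurable
  have kb: "cmod (k z) \<le> 1" for z unfolding k_def by (cases z) simp
  have bc: "integrable lborel (\<lambda>p. cnj (b p))" using b by simp
  have "(CLINT p|lborel. FT sg h a p * cnj (b p)) = (CLINT p|lborel. cnj (b p) * (CLINT x|lborel. a x * k (p, x))) / c"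
    unfolding FT_def c_def k_def by (simp add: mult_ac integral_divide_zero)
  also have "\<dots> = (CLINT x|lborel. a x * (CLINT p|lborel. cnj (b p) * k (p, x))) / c"
    using fubini_kern[OF a bc k kb] by simp
  also have "\<dots> = (CLINT x|lborel. a x * cnj (FT (-sg) h b x))"
  proof -
    have "cnj (FT (-sg) h b x) = (CLINT p|lborel. cnj (b p) * k (p, x)) / c" for x
    proof -
      have "cnj (exp (\<i> * complex_of_real (- sg * x * p / h))) = k (p, x)" for p
        unfolding k_def by (simp add: exp_cnj mult_ac)
      then show ?thesis
        unfolding FT_def c_def
        by (simp add: Bochner_Integration.integral_cnj[symmetric] mult.commute)
    qed
    then show ?thesis by (simp add: integral_divide_zero)
  qed
  finally show ?thesis .
qed

end


lemma snd_ft: "(CLINT x|lborel. std_normal_density x *\<^sub>R iexp (t * x)) = complex_of_real (exp (- t\<^sup>2 / 2))"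
proof -
  have "char std_normal_distribution t = complex_of_real (exp (- t\<^sup>2 / 2))"
    using char_std_normal_distribution by simp
  moreover have "char std_normal_distribution t = (CLINT x|lborel. std_normal_density x *\<^sub>R iexp (t * x))"
    unfolding char_def by (subst integral_density) auto
  ultimately show ?thesis by simp
qed

lemma gauss_eq: "exp (- ((e::real) * p)\<^sup>2 / 2) = sqrt (2 * pi) * std_normal_density (e * p)"
  by (simp add: std_normal_density_def)


lemma gauss_integrable:
  fixes e :: real
  assumes e: "e > 0" shows "integrable lborel (\<lambda>p. exp (- (e * p)\<^sup>2 / 2))"
proof -
  have "integrable lborel (\<lambda>p. std_normal_density (0 + e * p))"
    using e by (intro lborel_integrable_real_affine) auto
  then have "integrable lborel (\<lambda>p. sqrt (2 * pi) * std_normal_density (e * p))" by simp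
  then show ?thesis unfolding gauss_eq .
qed

lemma gauss_ft:
  fixes e lam :: real
  assumes e: "e > 0"
  shows "(CLINT p|lborel. complex_of_real (exp (- (e * p)\<^sup>2 / 2)) * iexp (lam * p))
       = complex_of_real (sqrt (2 * pi) / e * exp (- (lam / e)\<^sup>2 / 2))"
proof -
  define f where "f x = std_normal_density x *\<^sub>R iexp (lam / e * x)" for x
  have "(CLINT x|lborel. f x) = \<bar>e\<bar> *\<^sub>R (CLINT p|lborel. f (0 + e * p))"
    using e by (intro lborel_integral_real_affine) auto
  moreover have "(CLINT x|lborel. f x) = complex_of_real (exp (- (lam / e)\<^sup>2 / 2))"
    unfolding f_def by (rule snd_ft)
  ultimately have 1: "(CLINT p|lborel. f (e * p)) = complex_of_real (exp (- (lam / e)\<^sup>2 / 2) / e)"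
    using e by (simp add: scaleR_conv_of_real field_simps)
  have "(CLINT p|lborel. complex_of_real (exp (- (e * p)\<^sup>2 / 2)) * iexp (lam * p))
      = (CLINT p|lborel. complex_of_real (sqrt (2 * pi)) * f (e * p))"
    unfolding f_def gauss_eq using e by (intro Bochner_Integration.integral_cong) (auto simp: scaleR_conv_of_real)
  also have "\<dots> = complex_of_real (sqrt (2 * pi)) * complex_of_real (exp (- (lam / e)\<^sup>2 / 2) / e)"
    by (simp add: integral_mult_right_zero 1)
  also have "\<dots> = complex_of_real (sqrt (2 * pi) / e * exp (- (lam / e)\<^sup>2 / 2))"
    by simp
  finally show ?thesis .
qed


lemma meas_iexp[measurable]:
  "g \<in> borel_measurable M \<Longrightarrow> (\<lambda>z. exp (\<i> * complex_of_real (g z))) \<in> borel_measurable M"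
proof -
  have "(\<lambda>t::real. exp (\<i> * complex_of_real t)) \<in> borel_measurable borel"
    by (intro borel_measurable_continuous_onI continuous_intros)
  moreover assume "g \<in> borel_measurable M"
  ultimately show ?thesis by (rule measurable_compose[rotated])
qed

lemma nd_identity:
  fixes e h sg t :: real
  assumes e: "e > 0" and h: "h > 0" and sg: "sg\<^sup>2 = 1"
  shows "sqrt (2 * pi) / e * exp (- (sg * t / h / e)\<^sup>2 / 2) / (sqrt (2 * pi * h))\<^sup>2
       = normal_density 0 (e * h) t"
proof -
  have 1: "(sg * t / h / e)\<^sup>2 = t\<^sup>2 / (e * h)\<^sup>2"
    using sg e h by (simp add: power_divide power_mult_distrib)
  have 2: "- (t\<^sup>2 / (e * h)\<^sup>2) / 2 = - (t - 0)\<^sup>2 / (2 * (e * h)\<^sup>2)" by simp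
  have 3: "sqrt (2 * pi * (e * h)\<^sup>2) = sqrt (2 * pi) * e * h"
    using e h by (simp add: real_sqrt_mult)
  have 4: "(sqrt (2 * pi * h))\<^sup>2 = 2 * pi * h" using h by simp
  have 5: "sqrt (2 * pi) / e / (2 * pi * h) = 1 / (sqrt (2 * pi) * e * h)"
  proof -
    have s: "sqrt (2 * pi) * sqrt (2 * pi) = 2 * pi" by simp
    show ?thesis using e h pi_gt_zero by (simp add: field_simps s[symmetric])
  qed
  have "sqrt (2 * pi) / e * exp (- (sg * t / h / e)\<^sup>2 / 2) / (sqrt (2 * pi * h))\<^sup>2
      = exp (- (sg * t / h / e)\<^sup>2 / 2) * (sqrt (2 * pi) / e / (sqrt (2 * pi * h))\<^sup>2)"
    by (simp only: divide_inverse mult_ac)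
  also have "\<dots> = exp (- (t - 0)\<^sup>2 / (2 * (e * h)\<^sup>2)) * (1 / sqrt (2 * pi * (e * h)\<^sup>2))"
    unfolding 1 2 3 4 5 ..
  also have "\<dots> = normal_density 0 (e * h) t"
    unfolding normal_density_def by simp
  finally show ?thesis .
qed

context
  fixes sg h :: real
  assumes hpos: "h > 0" and sg2: "sg\<^sup>2 = 1"
begin

lemma FT_w_FT:
  assumes phi: "integrable lborel phi" and e: "e > 0"
  shows "FT (-sg) h (\<lambda>p. complex_of_real (exp (- (e * p)\<^sup>2 / 2)) * FT sg h phi p) x
       = (CLINT y|lborel. phi y * complex_of_real (normal_density 0 (e * h) (y - x)))"
proof -
  define c where "c = complex_of_real (sqrt (2 * pi * h))"
  define w where "w p = complex_of_real (exp (- (e * p)\<^sup>2 / 2))" for p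
  define k where "k = (\<lambda>(p::real, y::real). exp (\<i> * complex_of_real (sg * (y - x) / h * p)))"
  have k[measurable]: "k \<in> borel_measurable (borel \<Otimes>\<^sub>M borel)" unfolding k_def by measurable
  have kb: "cmod (k z) \<le> 1" for z unfolding k_def by (cases z) simp
  have wi: "integrable lborel w" unfolding w_def using gauss_integrable[OF e] by simp
  have ex: "exp (\<i> * complex_of_real (- sg * x * p / h)) * (exp (\<i> * complex_of_real (sg * p * y / h)) * phi y)
      = phi y * k (p, y)" for p y
  proof -
    have "- sg * x * p / h + sg * p * y / h = sg * (y - x) / h * p" using hpos by (simp add: field_simps)
    then have "\<i> * complex_of_real (- sg * x * p / h) + \<i> * complex_of_real (sg * p * y / h) = \<i> * complex_of_real (sg * (y - x) / h * p)"
      by (metis distrib_left of_real_add)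
    then show ?thesis unfolding k_def by (simp add: exp_add[symmetric] mult_ac)
  qed
  have "FT (-sg) h (\<lambda>p. w p * FT sg h phi p) x
      = (CLINT p|lborel. w p * (CLINT y|lborel. phi y * k (p, y))) / c / c"
  proof -
    have "exp (\<i> * complex_of_real (- sg * x * p / h)) * (w p * FT sg h phi p) = w p * (CLINT y|lborel. phi y * k (p, y)) / c" for p
    proof -
      have "exp (\<i> * complex_of_real (- sg * x * p / h)) * (w p * FT sg h phi p)
          = w p * (exp (\<i> * complex_of_real (- sg * x * p / h)) * (CLINT y|lborel. exp (\<i> * complex_of_real (sg * p * y / h)) * phi y)) / c"
        unfolding FT_def c_def by (simp only: times_divide_eq_right mult_ac)
      also have "exp (\<i> * complex_of_real (- sg * x * p / h)) * (CLINT y|lborel. exp (\<i> * complex_of_real (sg * p * y / h)) * phi y)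
          = (CLINT y|lborel. exp (\<i> * complex_of_real (- sg * x * p / h)) * (exp (\<i> * complex_of_real (sg * p * y / h)) * phi y))"
        by (rule integral_mult_right_zero[symmetric])
      finally show ?thesis unfolding ex .
    qed
    then show ?thesis unfolding FT_def[of "-sg"] c_def[symmetric] by (simp add: integral_divide_zero)
  qed
  also have "\<dots> = (CLINT y|lborel. phi y * (CLINT p|lborel. w p * k (p, y))) / c / c"
    using fubini_kern[OF phi wi k kb] by simp
  also have "\<dots> = (CLINT y|lborel. phi y * complex_of_real (normal_density 0 (e * h) (y - x)))"
  proof -
    have "(CLINT p|lborel. w p * k (p, y)) / c / c = complex_of_real (normal_density 0 (e * h) (y - x))" for y
    proof -
      have "(CLINT p|lborel. w p * k (p, y)) = complex_of_real (sqrt (2 * pi) / e * exp (- (sg * (y - x) / h / e)\<^sup>2 / 2))"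
        unfolding w_def k_def using gauss_ft[OF e, of "sg * (y - x) / h"] by simp
      moreover have "c * c = complex_of_real ((sqrt (2 * pi * h))\<^sup>2)" unfolding c_def by (metis of_real_mult power2_eq_square)
      ultimately have "(CLINT p|lborel. w p * k (p, y)) / c / c = complex_of_real (sqrt (2 * pi) / e * exp (- (sg * (y - x) / h / e)\<^sup>2 / 2) / (sqrt (2 * pi * h))\<^sup>2)"
        by (simp add: divide_divide_eq_left)
      then show ?thesis by (simp only: nd_identity[OF e hpos sg2])
    qed
    then have "phi y * (CLINT p|lborel. w p * k (p, y)) / c / c = phi y * complex_of_real (normal_density 0 (e * h) (y - x))" for y
      by (metis times_divide_eq_right)
    moreover have "(CLINT y|lborel. phi y * (CLINT p|lborel. w p * k (p, y))) / c / c
        = (CLINT y|lborel. phi y * (CLINT p|lborel. w p * k (p, y)) / c / c)"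
      by (simp only: integral_divide_zero)
    ultimately show ?thesis by simp
  qed
  finally show ?thesis unfolding w_def .
qed

end


definition nice :: "wf \<Rightarrow> bool" where
  "nice g \<longleftrightarrow> continuous_on UNIV g \<and> (\<exists>M. \<forall>x. cmod (g x) \<le> M) \<and> (\<exists>R. \<forall>x. R < \<bar>x\<bar> \<longrightarrow> g x = 0)"

lemma nice_meas: "nice g \<Longrightarrow> g \<in> borel_measurable borel"
  unfolding nice_def by (auto intro: borel_measurable_continuous_onI)

lemma nice_cs: assumes "nice g" shows "cs g"
proof -
  obtain M R where M: "\<And>x. cmod (g x) \<le> M" and R: "\<And>x. R < \<bar>x\<bar> \<Longrightarrow> g x = 0"
    using assms unfolding nice_def by auto
  have m: "g \<in> borel_measurable borel" by (rule nice_meas[OF assms])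
  have "integrable lborel (\<lambda>x. M\<^sup>2 * indicator {-R..R} x :: real)"
    by (intro integrable_mult_right integrable_real_indicator) (auto simp: emeasure_lborel_Icc_eq)
  then have "integrable lborel (\<lambda>x. (cmod (g x))\<^sup>2)"
  proof (rule Bochner_Integration.integrable_bound)
    show "(\<lambda>x. (cmod (g x))\<^sup>2) \<in> borel_measurable lborel" using m by measurable
    show "AE x in lborel. norm ((cmod (g x))\<^sup>2) \<le> norm (M\<^sup>2 * indicator {-R..R} x :: real)"
    proof (intro AE_I2)
      fix x
      show "norm ((cmod (g x))\<^sup>2) \<le> norm (M\<^sup>2 * indicator {-R..R} x :: real)"
      proof (cases "R < \<bar>x\<bar>")
        case True then show ?thesis using R by simp
      next
        case False
        then have "x \<in> {-R..R}" by auto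
        moreover have "(cmod (g x))\<^sup>2 \<le> M\<^sup>2" using M[of x] by (intro power_mono) auto
        ultimately show ?thesis by simp
      qed
    qed
  qed
  then show ?thesis unfolding cs_def sq_int_def using m R by auto
qed

lemma nd_scale:
  fixes s t :: real assumes s: "s > 0"
  shows "s * normal_density 0 s (s * t) = std_normal_density t"
proof -
  have 1: "sqrt (2 * pi * s\<^sup>2) = sqrt (2 * pi) * s" using s by (simp add: real_sqrt_mult)
  have 2: "(s * t - 0)\<^sup>2 / (2 * s\<^sup>2) = t\<^sup>2 / 2" using s by (simp add: power_mult_distrib)
  have 3: "s * (1 / (sqrt (2 * pi) * s)) = 1 / sqrt (2 * pi)" using s by simp
  have "s * normal_density 0 s (s * t) = s * (1 / (sqrt (2 * pi) * s)) * exp (- (t\<^sup>2 / 2))"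
    unfolding normal_density_def 1 by (simp only: mult.assoc minus_divide_left[symmetric] 2)
  also have "\<dots> = std_normal_density t" unfolding 3 std_normal_density_def by simp
  finally show ?thesis .
qed

lemma approx_id:
  fixes M :: real and phi :: wf and sig :: "nat \<Rightarrow> real"
  assumes cont: "continuous_on UNIV phi" and M: "\<And>x. cmod (phi x) \<le> M"
    and sig: "\<And>n. sig n > 0" and sig0: "sig \<longlonglongrightarrow> 0"
  shows "(\<lambda>n. CLINT y|lborel. phi y * complex_of_real (normal_density 0 (sig n) (y - x))) \<longlonglongrightarrow> phi x"
proof -
  have m[measurable]: "phi \<in> borel_measurable borel" using cont by (rule borel_measurable_continuous_onI)
  have eq: "(CLINT y|lborel. phi y * complex_of_real (normal_density 0 (sig n) (y - x)))
      = (CLINT s|lborel. phi (x + sig n * s) * complex_of_real (std_normal_density s))" for n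
  proof -
    have "(CLINT y|lborel. phi y * complex_of_real (normal_density 0 (sig n) (y - x)))
        = \<bar>sig n\<bar> *\<^sub>R (CLINT s|lborel. phi (x + sig n * s) * complex_of_real (normal_density 0 (sig n) (x + sig n * s - x)))"
      using sig[of n] by (intro lborel_integral_real_affine) auto
    also have "\<dots> = (CLINT s|lborel. \<bar>sig n\<bar> *\<^sub>R (phi (x + sig n * s) * complex_of_real (normal_density 0 (sig n) (x + sig n * s - x))))"
      by (rule integral_scaleR_right[symmetric])
    also have "\<dots> = (CLINT s|lborel. phi (x + sig n * s) * complex_of_real (std_normal_density s))"
    proof (rule Bochner_Integration.integral_cong[OF refl])
      fix s
      have a: "\<bar>sig n\<bar> = sig n" using sig[of n] by simp
      have b: "x + sig n * s - x = sig n * s" by simp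
      have "complex_of_real (sig n) * complex_of_real (normal_density 0 (sig n) (sig n * s)) = complex_of_real (std_normal_density s)"
        using nd_scale[OF sig[of n], of s] by (metis of_real_mult)
      then show "\<bar>sig n\<bar> *\<^sub>R (phi (x + sig n * s) * complex_of_real (normal_density 0 (sig n) (x + sig n * s - x)))
          = phi (x + sig n * s) * complex_of_real (std_normal_density s)"
        unfolding a b scaleR_conv_of_real by (metis mult.left_commute)
    qed
    finally show ?thesis .
  qed
  have "(\<lambda>n. CLINT s|lborel. phi (x + sig n * s) * complex_of_real (std_normal_density s))
      \<longlonglongrightarrow> (CLINT s|lborel. phi x * complex_of_real (std_normal_density s))"
  proof (rule integral_dominated_convergence[where w="\<lambda>s. M * std_normal_density s"])
    show "(\<lambda>s. phi x * complex_of_real (std_normal_density s)) \<in> borel_measurable lborel" by measurable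
    show "(\<lambda>s. phi (x + sig n * s) * complex_of_real (std_normal_density s)) \<in> borel_measurable lborel" for n
      by measurable
    show "integrable lborel (\<lambda>s. M * std_normal_density s)" by simp
    show "AE s in lborel. (\<lambda>n. phi (x + sig n * s) * complex_of_real (std_normal_density s)) \<longlonglongrightarrow> phi x * complex_of_real (std_normal_density s)"
    proof (intro AE_I2 tendsto_intros)
      fix s
      have "(\<lambda>n. x + sig n * s) \<longlonglongrightarrow> x + 0 * s" by (intro tendsto_intros sig0)
      moreover have "isCont phi (x + 0 * s)" using cont by (simp add: continuous_on_eq_continuous_at)
      ultimately show "(\<lambda>n. phi (x + sig n * s)) \<longlonglongrightarrow> phi x"
        using isCont_tendsto_compose by fastforce
    qed
    show "AE s in lborel. norm (phi (x + sig n * s) * complex_of_real (std_normal_density s)) \<le> M * std_normal_density s" for n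
      using M by (auto intro!: AE_I2 mult_right_mono simp: norm_mult)
  qed
  also have "(CLINT s|lborel. phi x * complex_of_real (std_normal_density s)) = phi x"
    by (simp add: integral_mult_right_zero)
  finally show ?thesis unfolding eq .
qed

lemma approx_bound:
  fixes M :: real and phi :: wf
  assumes m: "phi \<in> borel_measurable borel" and M: "\<And>x. cmod (phi x) \<le> M" and s: "s > 0"
  shows "cmod (CLINT y|lborel. phi y * complex_of_real (normal_density 0 s (y - x))) \<le> M"
proof -
  have "cmod (CLINT y|lborel. phi y * complex_of_real (normal_density 0 s (y - x)))
      \<le> (LINT y|lborel. norm (phi y * complex_of_real (normal_density 0 s (y - x))))"
    by (rule integral_norm_bound)
  also have "\<dots> \<le> (LINT y|lborel. M * normal_density 0 s (y - x))"
  proof (rule integral_mono)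
    have "integrable lborel (\<lambda>y. normal_density 0 s (y - x))"
    proof -
      have "integrable lborel (\<lambda>y. normal_density x s y)" using s by simp
      moreover have "normal_density x s y = normal_density 0 s (y - x)" for y
        by (simp add: normal_density_def)
      ultimately show ?thesis by simp
    qed
    then show "integrable lborel (\<lambda>y. M * normal_density 0 s (y - x))" by simp
    then show "integrable lborel (\<lambda>y. norm (phi y * complex_of_real (normal_density 0 s (y - x))))"
    proof (rule Bochner_Integration.integrable_bound)
      have M0: "M \<ge> 0" using M[of 0] norm_ge_zero[of "phi 0"] by linarith
      show "(\<lambda>y. norm (phi y * complex_of_real (normal_density 0 s (y - x)))) \<in> borel_measurable lborel"
        using m by measurable
      show "AE y in lborel. norm (norm (phi y * complex_of_real (normal_density 0 s (y - x)))) \<le> norm (M * normal_density 0 s (y - x))"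
        using M M0 by (auto intro!: AE_I2 mult_right_mono simp: norm_mult)
    qed
    show "norm (phi y * complex_of_real (normal_density 0 s (y - x))) \<le> M * normal_density 0 s (y - x)" for y
      using M by (auto simp: norm_mult intro!: mult_right_mono)
  qed
  also have "\<dots> = M"
  proof -
    have "normal_density x s y = normal_density 0 s (y - x)" for y
      by (simp add: normal_density_def)
    then have "(LINT y|lborel. normal_density 0 s (y - x)) = 1"
      using integral_normal_density[of s x] s by simp
    then show ?thesis by simp
  qed
  finally show ?thesis .
qed


lemma conv_meas[measurable]:
  assumes [measurable]: "phi \<in> borel_measurable borel"
  shows "(\<lambda>x. CLINT y|lborel. phi y * complex_of_real (normal_density 0 s (y - x))) \<in> borel_measurable borel"
proof (rule lborel.borel_measurable_lebesgue_integral[where f="\<lambda>x y. phi y * complex_of_real (normal_density 0 s (y - x))"])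
  show "(\<lambda>(x, y). phi y * complex_of_real (normal_density 0 s (y - x))) \<in> borel_measurable (borel \<Otimes>\<^sub>M lborel)"
    by measurable
qed

context
  fixes sg h :: real
  assumes hpos: "h > 0" and sg2: "sg\<^sup>2 = 1"
begin

lemma parseval_nice:
  assumes nphi: "nice phi"
  shows "sq_int (FT sg h phi) \<and> nsq (FT sg h phi) = nsq phi"
proof -
  define F where "F = FT sg h phi"
  have phim[measurable]: "phi \<in> borel_measurable borel" by (rule nice_meas[OF nphi])
  have phic: "cs phi" by (rule nice_cs[OF nphi])
  have phii: "integrable lborel phi" by (rule cs_integrable[OF phic])
  have phisq: "sq_int phi" using phic cs_def by auto
  obtain M where M: "\<And>x. cmod (phi x) \<le> M" using nphi nice_def by auto
  have cont: "continuous_on UNIV phi" using nphi nice_def by auto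
  have M0: "M \<ge> 0" using M[of 0] norm_ge_zero[of "phi 0"] by linarith
  have Fm[measurable]: "F \<in> borel_measurable borel" unfolding F_def by (rule FT_meas[OF phim])
  define K where "K = (LINT x|lborel. cmod (phi x)) / sqrt (2 * pi * h)"
  have FK: "cmod (F p) \<le> K" for p unfolding F_def K_def by (rule FT_bound[OF hpos phii])
  define e where "e n = 1 / real (Suc n)" for n
  have epos: "e n > 0" for n unfolding e_def by simp
  have e0: "e \<longlonglongrightarrow> 0" unfolding e_def by (rule LIMSEQ_inverse_real_of_nat[unfolded inverse_eq_divide])
  define w where "w n p = exp (- (e n * p)\<^sup>2 / 2)" for n p
  have wi: "integrable lborel (w n)" for n unfolding w_def by (rule gauss_integrable[OF epos])
  have wle: "w n p \<le> 1" for n p unfolding w_def by simp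
  have w0: "w n p \<ge> 0" for n p unfolding w_def by simp
  define C where "C n x = (CLINT y|lborel. phi y * complex_of_real (normal_density 0 (e n * h) (y - x)))" for n x
  have Cm[measurable]: "C n \<in> borel_measurable borel" for n unfolding C_def by measurable
  have B: "complex_of_real (LINT p|lborel. w n p * (cmod (F p))\<^sup>2) = (CLINT x|lborel. phi x * cnj (C n x))" for n
  proof -
    define b where "b p = complex_of_real (w n p) * F p" for p
    have bm[measurable]: "b \<in> borel_measurable borel" unfolding b_def w_def by measurable
    have bi: "integrable lborel b"
    proof (rule Bochner_Integration.integrable_bound[where f="\<lambda>p. K * w n p"])
      show "integrable lborel (\<lambda>p. K * w n p)" using wi by simp
      show "b \<in> borel_measurable lborel" by simp
      show "AE p in lborel. norm (b p) \<le> norm (K * w n p)"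
      proof (intro AE_I2)
        fix p
        have "cmod (b p) = w n p * cmod (F p)" unfolding b_def using w0 by (simp add: norm_mult)
        also have "\<dots> \<le> w n p * K" using FK w0 by (intro mult_left_mono) auto
        finally show "norm (b p) \<le> norm (K * w n p)" using w0 FK[of 0] norm_ge_zero[of "F 0"]
          by (simp add: mult.commute)
      qed
    qed
    have adj: "(CLINT p|lborel. F p * cnj (b p)) = (CLINT x|lborel. phi x * cnj (FT (-sg) h b x))"
      unfolding F_def by (rule FT_adjoint[OF hpos phii bi])
    have fb: "FT (-sg) h b x = C n x" for x
      unfolding b_def w_def C_def F_def by (rule FT_w_FT[OF hpos sg2 phii epos])
    have 1: "(CLINT p|lborel. F p * cnj (b p)) = (CLINT x|lborel. phi x * cnj (C n x))"
      using adj fb by simp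
    have "F p * cnj (b p) = complex_of_real (w n p * (cmod (F p))\<^sup>2)" for p
      unfolding b_def using complex_norm_square[of "F p"] by (simp add: mult_ac)
    then have "(CLINT p|lborel. F p * cnj (b p)) = complex_of_real (LINT p|lborel. w n p * (cmod (F p))\<^sup>2)"
      by (simp only: Bochner_Integration.integral_complex_of_real)
    then show ?thesis using 1 by simp
  qed
  have D: "(\<lambda>n. CLINT x|lborel. phi x * cnj (C n x)) \<longlonglongrightarrow> (CLINT x|lborel. phi x * cnj (phi x))"
  proof (rule integral_dominated_convergence[where w="\<lambda>x. cmod (phi x) * M"])
    show "(\<lambda>x. phi x * cnj (phi x)) \<in> borel_measurable lborel" by measurable
    show "(\<lambda>x. phi x * cnj (C n x)) \<in> borel_measurable lborel" for n by measurable
    show "integrable lborel (\<lambda>x. cmod (phi x) * M)" using phii by simp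
    show "AE x in lborel. (\<lambda>n. phi x * cnj (C n x)) \<longlonglongrightarrow> phi x * cnj (phi x)"
    proof (intro AE_I2 tendsto_intros)
      fix x
      show "(\<lambda>n. C n x) \<longlonglongrightarrow> phi x" unfolding C_def
        by (rule approx_id[OF cont M]) (use epos hpos e0 in \<open>auto intro: tendsto_mult_left_zero\<close>)
    qed
    show "AE x in lborel. norm (phi x * cnj (C n x)) \<le> cmod (phi x) * M" for n
    proof (intro AE_I2)
      fix x
      have "cmod (C n x) \<le> M" unfolding C_def
        by (rule approx_bound[OF phim M]) (use epos hpos in simp)
      then show "norm (phi x * cnj (C n x)) \<le> cmod (phi x) * M"
        by (simp add: norm_mult mult_left_mono)
    qed
  qed
  have "(CLINT x|lborel. phi x * cnj (phi x)) = complex_of_real (nsq phi)"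
  proof -
    have "phi x * cnj (phi x) = complex_of_real ((cmod (phi x))\<^sup>2)" for x
      by (rule complex_norm_square[symmetric])
    then show ?thesis unfolding nsq_def by (simp only: Bochner_Integration.integral_complex_of_real)
  qed
  then have "(\<lambda>n. complex_of_real (LINT p|lborel. w n p * (cmod (F p))\<^sup>2)) \<longlonglongrightarrow> complex_of_real (nsq phi)"
    using D unfolding B[symmetric] by simp
  then have lim: "(\<lambda>n. LINT p|lborel. w n p * (cmod (F p))\<^sup>2) \<longlonglongrightarrow> nsq phi"
    by (simp add: tendsto_of_real_iff)
  define u where "u n p = complex_of_real (exp (- (e n * p)\<^sup>2 / 4)) * F p" for n p
  have usq: "(cmod (u n p))\<^sup>2 = w n p * (cmod (F p))\<^sup>2" for n p
  proof -
    have "(exp (- (e n * p)\<^sup>2 / 4))\<^sup>2 = exp (- (e n * p)\<^sup>2 / 2)"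
      by (simp add: power2_eq_square exp_add[symmetric])
    then show ?thesis unfolding u_def w_def by (simp add: norm_mult power_mult_distrib)
  qed
  have usqi: "sq_int (u n)" for n
  proof (rule sq_intI)
    show "u n \<in> borel_measurable borel" unfolding u_def by measurable
    have "integrable lborel (\<lambda>p. K\<^sup>2 * w n p)" using wi by simp
    then show "integrable lborel (\<lambda>p. (cmod (u n p))\<^sup>2)"
    proof (rule Bochner_Integration.integrable_bound)
      show "(\<lambda>p. (cmod (u n p))\<^sup>2) \<in> borel_measurable lborel" unfolding u_def by measurable
      show "AE p in lborel. norm ((cmod (u n p))\<^sup>2) \<le> norm (K\<^sup>2 * w n p)"
      proof (intro AE_I2)
        fix p
        have "(cmod (F p))\<^sup>2 \<le> K\<^sup>2" using FK[of p] by (intro power_mono) auto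
        then have "w n p * (cmod (F p))\<^sup>2 \<le> w n p * K\<^sup>2" using w0 by (intro mult_left_mono) auto
        then show "norm ((cmod (u n p))\<^sup>2) \<le> norm (K\<^sup>2 * w n p)" unfolding usq using w0
          by (simp add: mult.commute)
      qed
    qed
  qed
  have nsqu: "nsq (u n) = (LINT p|lborel. w n p * (cmod (F p))\<^sup>2)" for n
    unfolding nsq_def usq ..
  have ulim: "(\<lambda>n. u n p) \<longlonglongrightarrow> F p" for p
  proof -
    have "(\<lambda>n. complex_of_real (exp (- (e n * p)\<^sup>2 / 4)) * F p) \<longlonglongrightarrow> complex_of_real (exp (- (0 * p)\<^sup>2 / 4)) * F p"
      by (intro tendsto_intros e0) auto
    then show ?thesis unfolding u_def by simp
  qed
  have up: "sq_int F \<and> nsq F \<le> nsq phi"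
  proof -
    have "sq_int F \<and> nsq F \<le> nsq phi + d" if d: "d > 0" for d
    proof (rule L2_fatou[OF usqi Fm])
      show "AE x in lborel. (\<lambda>n. u n x) \<longlonglongrightarrow> F x" using ulim by simp
      have "eventually (\<lambda>n. (LINT p|lborel. w n p * (cmod (F p))\<^sup>2) < nsq phi + d) sequentially"
        using lim d by (intro order_tendstoD) auto
      then show "eventually (\<lambda>n. nsq (u n) \<le> nsq phi + d) sequentially"
        unfolding nsqu by (auto elim: eventually_mono)
    qed
    then show ?thesis by (meson field_le_epsilon zero_less_one)
  qed
  have "nsq phi \<le> nsq F"
  proof (rule LIMSEQ_le_const2[OF lim])
    show "\<exists>N. \<forall>n\<ge>N. (LINT p|lborel. w n p * (cmod (F p))\<^sup>2) \<le> nsq F"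
    proof (intro exI allI impI)
      fix n
      show "(LINT p|lborel. w n p * (cmod (F p))\<^sup>2) \<le> nsq F"
        unfolding nsq_def
      proof (rule integral_mono)
        show "integrable lborel (\<lambda>p. w n p * (cmod (F p))\<^sup>2)"
          using sq_intD2[OF usqi[of n]] unfolding usq .
        show "integrable lborel (\<lambda>p. (cmod (F p))\<^sup>2)" using up sq_intD2 by auto
        show "w n p * (cmod (F p))\<^sup>2 \<le> (cmod (F p))\<^sup>2" for p
          using wle[of n p] w0[of n p] by (intro mult_left_le_one_le) auto
      qed
    qed
  qed
  then show ?thesis using up unfolding F_def by auto
qed

end


lemma cont_approx:
  fixes g :: wf
  assumes gm: "g \<in> borel_measurable borel"
  shows "\<exists>psi. (\<forall>n. continuous_on UNIV (psi n)) \<and> (AE x in lborel. (\<lambda>n. psi n x) \<longlonglongrightarrow> g x)"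
proof -
  have "g \<in> borel_measurable lebesgue" using gm by (intro measurable_completion) simp
  then have "g measurable_on UNIV" by (rule lebesgue_measurable_imp_measurable_on) simp
  then obtain N psi where N: "negligible N" and c: "\<And>n. continuous_on UNIV (psi n)"
    and l: "\<And>x. x \<notin> N \<Longrightarrow> (\<lambda>n. psi n x) \<longlonglongrightarrow> (if x \<in> UNIV then g x else 0)"
    unfolding measurable_on_def by blast
  have "N \<in> null_sets lebesgue" using N negligible_iff_null_sets by blast
  then have "AE x in lebesgue. x \<notin> N" by (rule AE_not_in)
  then have "AE x in lborel. x \<notin> N" by (simp add: AE_completion_iff)
  then have "AE x in lborel. (\<lambda>n. psi n x) \<longlonglongrightarrow> g x" by (rule AE_mp) (use l in auto)
  then show ?thesis using c by blast
qed

definition clipC :: "real \<Rightarrow> complex \<Rightarrow> complex" where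
  "clipC M z = complex_of_real (max (-M) (min M (Re z))) + \<i> * complex_of_real (max (-M) (min M (Im z)))"

lemma clipC_id: "cmod z \<le> M \<Longrightarrow> clipC M z = z"
proof -
  assume z: "cmod z \<le> M"
  have "\<bar>Re z\<bar> \<le> M" "\<bar>Im z\<bar> \<le> M" using abs_Re_le_cmod[of z] abs_Im_le_cmod[of z] z by auto
  then have "max (-M) (min M (Re z)) = Re z" "max (-M) (min M (Im z)) = Im z" by auto
  then show ?thesis unfolding clipC_def by (simp add: complex_eq_iff)
qed

lemma clipC_bound: "M \<ge> 0 \<Longrightarrow> cmod (clipC M z) \<le> 2 * M"
proof -
  assume M: "M \<ge> 0"
  have "cmod (clipC M z) \<le> cmod (complex_of_real (max (-M) (min M (Re z)))) + cmod (\<i> * complex_of_real (max (-M) (min M (Im z))))"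
    unfolding clipC_def by (rule norm_triangle_ineq)
  also have "\<dots> \<le> M + M" using M by (auto simp: norm_mult)
  finally show ?thesis by simp
qed

lemma clipC_tendsto: "(\<lambda>n. f n) \<longlonglongrightarrow> a \<Longrightarrow> (\<lambda>n. clipC M (f n)) \<longlonglongrightarrow> clipC M a"
  unfolding clipC_def by (intro tendsto_intros)

lemma clipC_cont: "continuous_on UNIV f \<Longrightarrow> continuous_on UNIV (\<lambda>x. clipC M (f x))"
  unfolding clipC_def by (intro continuous_intros)

definition cutoff :: "real \<Rightarrow> real \<Rightarrow> real" where
  "cutoff R x = max 0 (min 1 (R + 1 - \<bar>x\<bar>))"

lemma cutoff_cont: "continuous_on UNIV (cutoff R)"
  unfolding cutoff_def[abs_def] by (intro continuous_intros)

lemma dens_bdd: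
  fixes g :: wf
  assumes gm: "g \<in> borel_measurable borel" and M: "\<And>x. cmod (g x) \<le> M"
    and R: "\<And>x. R < \<bar>x\<bar> \<Longrightarrow> g x = 0"
  shows "\<exists>phi. (\<forall>n. nice (phi n) \<and> (\<forall>x. R + 1 < \<bar>x\<bar> \<longrightarrow> phi n x = 0)) \<and> L2conv phi g"
proof -
  have M0: "M \<ge> 0" using M[of 0] norm_ge_zero[of "g 0"] by linarith
  obtain psi where c: "\<And>n. continuous_on UNIV (psi n)" and l: "AE x in lborel. (\<lambda>n. psi n x) \<longlonglongrightarrow> g x"
    using cont_approx[OF gm] by blast
  define phi where "phi n x = complex_of_real (cutoff R x) * clipC M (psi n x)" for n x
  have phic: "continuous_on UNIV (phi n)" for n
    unfolding phi_def using cutoff_cont[of R] clipC_cont[OF c[of n], of M]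
    by (intro continuous_intros) (auto simp: continuous_on_of_real)
  have cut01: "0 \<le> cutoff R x" "cutoff R x \<le> 1" for x unfolding cutoff_def by auto
  have phib: "cmod (phi n x) \<le> 2 * M" for n x
  proof -
    have "cmod (phi n x) = cutoff R x * cmod (clipC M (psi n x))" unfolding phi_def using cut01 by (simp add: norm_mult)
    also have "\<dots> \<le> 1 * (2 * M)" using cut01 clipC_bound[OF M0] by (intro mult_mono) auto
    finally show ?thesis by simp
  qed
  have phis: "phi n x = 0" if "R + 1 < \<bar>x\<bar>" for n x
    using that unfolding phi_def cutoff_def by simp
  have nphi: "nice (phi n)" for n
    unfolding nice_def using phic phib phis by blast
  have phim[measurable]: "phi n \<in> borel_measurable borel" for n by (rule nice_meas[OF nphi])
  have "(\<lambda>n. LINT x|lborel. (cmod (phi n x - g x))\<^sup>2) \<longlonglongrightarrow> (LINT (x::real)|lborel. (0::real))"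
  proof (rule integral_dominated_convergence[where w="\<lambda>x. (3 * M)\<^sup>2 * indicator {-(R+1)..R+1} x"
        and f="\<lambda>x::real. 0::real" and s="\<lambda>n x. (cmod (phi n x - g x))\<^sup>2"])
    show "(\<lambda>x. 0::real) \<in> borel_measurable lborel" by simp
    show "(\<lambda>x. (cmod (phi n x - g x))\<^sup>2) \<in> borel_measurable lborel" for n using gm by measurable
    show "integrable lborel (\<lambda>x. (3 * M)\<^sup>2 * indicator {-(R+1)..R+1} x :: real)"
      by (intro integrable_mult_right integrable_real_indicator) (auto simp: emeasure_lborel_Icc_eq)
    show "AE x in lborel. (\<lambda>n. (cmod (phi n x - g x))\<^sup>2) \<longlonglongrightarrow> 0"
      using l
    proof eventually_elim
      case (elim x)
      have "g x = complex_of_real (cutoff R x) * clipC M (g x)"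
      proof (cases "R < \<bar>x\<bar>")
        case True
        then show ?thesis using R[OF True] clipC_id[of 0 M] M0 by simp
      next
        case False
        then have "cutoff R x = 1" unfolding cutoff_def by auto
        then show ?thesis using clipC_id[OF M[of x]] by simp
      qed
      moreover have "(\<lambda>n. phi n x) \<longlonglongrightarrow> complex_of_real (cutoff R x) * clipC M (g x)"
        unfolding phi_def by (intro tendsto_intros clipC_tendsto elim)
      ultimately have "(\<lambda>n. phi n x - g x) \<longlonglongrightarrow> 0" by (simp add: LIM_zero)
      then have "(\<lambda>n. (cmod (phi n x - g x))\<^sup>2) \<longlonglongrightarrow> (cmod 0)\<^sup>2" by (intro tendsto_intros)
      then show ?case by simp
    qed
    show "AE x in lborel. norm ((cmod (phi n x - g x))\<^sup>2) \<le> (3 * M)\<^sup>2 * indicator {-(R+1)..R+1} x" for n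
    proof (intro AE_I2)
      fix x
      show "norm ((cmod (phi n x - g x))\<^sup>2) \<le> (3 * M)\<^sup>2 * indicator {-(R+1)..R+1} x"
      proof (cases "R + 1 < \<bar>x\<bar>")
        case True
        then have "phi n x = 0" "g x = 0" using phis R by auto
        then show ?thesis by simp
      next
        case False
        have "cmod (phi n x - g x) \<le> cmod (phi n x) + cmod (g x)" by (rule norm_triangle_ineq4)
        also have "\<dots> \<le> 3 * M" using phib[of n x] M[of x] by simp
        finally have "(cmod (phi n x - g x))\<^sup>2 \<le> (3 * M)\<^sup>2" by (intro power_mono) auto
        moreover have "x \<in> {-(R+1)..R+1}" using False by auto
        ultimately show ?thesis by simp
      qed
    qed
  qed
  then have "L2conv phi g" unfolding L2conv_def nsq_def by simp
  then show ?thesis using nphi phis by blast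
qed


lemma nice_diff:
  assumes f: "nice f" and g: "nice g" shows "nice (\<lambda>x. f x - g x)"
proof -
  obtain M1 R1 where M1: "\<And>x. cmod (f x) \<le> M1" and R1: "\<And>x. R1 < \<bar>x\<bar> \<Longrightarrow> f x = 0" and c1: "continuous_on UNIV f"
    using f nice_def by metis
  obtain M2 R2 where M2: "\<And>x. cmod (g x) \<le> M2" and R2: "\<And>x. R2 < \<bar>x\<bar> \<Longrightarrow> g x = 0" and c2: "continuous_on UNIV g"
    using g nice_def by metis
  have "continuous_on UNIV (\<lambda>x. f x - g x)" using c1 c2 by (intro continuous_intros)
  moreover have "cmod (f x - g x) \<le> M1 + M2" for x
    using norm_triangle_ineq4[of "f x" "g x"] M1[of x] M2[of x] by linarith
  moreover have "f x - g x = 0" if "max R1 R2 < \<bar>x\<bar>" for x using that R1 R2 by auto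
  ultimately show ?thesis unfolding nice_def by blast
qed

lemma density_cs:
  assumes g: "cs g"
  shows "\<exists>phi R'. (\<forall>k. nice (phi k) \<and> (\<forall>x. R' < \<bar>x\<bar> \<longrightarrow> phi k x = 0)) \<and> L2conv phi g"
proof -
  obtain R where R: "\<And>x. R < \<bar>x\<bar> \<Longrightarrow> g x = 0" and gs: "sq_int g" using g cs_def by auto
  have gm[measurable]: "g \<in> borel_measurable borel" using gs by measurable
  define gk where "gk k x = (if cmod (g x) \<le> real k then g x else 0)" for k x
  have gkm[measurable]: "gk k \<in> borel_measurable borel" for k unfolding gk_def by measurable
  have gkb: "cmod (gk k x) \<le> real k" for k x unfolding gk_def by auto
  have gkR: "R < \<bar>x\<bar> \<Longrightarrow> gk k x = 0" for k x unfolding gk_def using R by auto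
  have gks: "sq_int (gk k)" for k
    by (rule sq_int_bound[OF gs gkm, where C=1]) (auto simp: gk_def)
  have gkconv: "(\<lambda>k. nsq (\<lambda>x. gk k x - g x)) \<longlonglongrightarrow> 0"
  proof -
    have "(\<lambda>k. LINT x|lborel. (cmod (gk k x - g x))\<^sup>2) \<longlonglongrightarrow> (LINT (x::real)|lborel. (0::real))"
    proof (rule integral_dominated_convergence[where w="\<lambda>x. (cmod (g x))\<^sup>2"
          and f="\<lambda>x::real. 0::real" and s="\<lambda>k x. (cmod (gk k x - g x))\<^sup>2"])
      show "(\<lambda>x::real. 0::real) \<in> borel_measurable lborel" by simp
      show "(\<lambda>x. (cmod (gk k x - g x))\<^sup>2) \<in> borel_measurable lborel" for k by measurable
      show "integrable lborel (\<lambda>x. (cmod (g x))\<^sup>2)" by (rule sq_intD2[OF gs])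
      show "AE x in lborel. (\<lambda>k. (cmod (gk k x - g x))\<^sup>2) \<longlonglongrightarrow> 0"
      proof (intro AE_I2)
        fix x
        obtain N :: nat where "cmod (g x) \<le> real N" using real_arch_simple by blast
        then have "\<forall>k\<ge>N. (cmod (gk k x - g x))\<^sup>2 = 0" unfolding gk_def by auto
        then show "(\<lambda>k. (cmod (gk k x - g x))\<^sup>2) \<longlonglongrightarrow> 0"
          by (intro tendsto_eventually) (auto simp: eventually_sequentially)
      qed
      show "AE x in lborel. norm ((cmod (gk k x - g x))\<^sup>2) \<le> (cmod (g x))\<^sup>2" for k
        by (intro AE_I2) (auto simp: gk_def)
    qed
    then show ?thesis unfolding nsq_def by simp
  qed
  have "\<forall>k. \<exists>phi. (\<forall>n. nice (phi n) \<and> (\<forall>x. R + 1 < \<bar>x\<bar> \<longrightarrow> phi n x = 0)) \<and> L2conv phi (gk k)"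
    using dens_bdd[OF gkm gkb gkR] by blast
  then obtain Phi where Phi: "\<And>k n. nice (Phi k n)" "\<And>k n x. R + 1 < \<bar>x\<bar> \<Longrightarrow> Phi k n x = 0"
    and Phic: "\<And>k. L2conv (Phi k) (gk k)"
    by metis
  have "\<forall>k. \<exists>n. nsq (\<lambda>x. Phi k n x - gk k x) < 1 / real (Suc k)"
  proof
    fix k
    have "eventually (\<lambda>n. nsq (\<lambda>x. Phi k n x - gk k x) < 1 / real (Suc k)) sequentially"
      using Phic[of k] unfolding L2conv_def by (intro order_tendstoD) auto
    then show "\<exists>n. nsq (\<lambda>x. Phi k n x - gk k x) < 1 / real (Suc k)"
      by (auto simp: eventually_sequentially)
  qed
  then obtain nn where nn: "\<And>k. nsq (\<lambda>x. Phi k (nn k) x - gk k x) < 1 / real (Suc k)" by metis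
  define phi where "phi k = Phi k (nn k)" for k
  have nphi: "nice (phi k)" for k unfolding phi_def by (rule Phi)
  have phis: "sq_int (phi k)" for k using nice_cs[OF nphi] cs_def by auto
  have "L2conv phi g" unfolding L2conv_def
  proof (rule tendsto_sandwich[where f="\<lambda>k. 0" and h="\<lambda>k. 2 * (1 / real (Suc k)) + 2 * nsq (\<lambda>x. gk k x - g x)"])
    show "eventually (\<lambda>k. 0 \<le> nsq (\<lambda>x. phi k x - g x)) sequentially" by (simp add: nsq_nonneg)
    show "eventually (\<lambda>k. nsq (\<lambda>x. phi k x - g x) \<le> 2 * (1 / real (Suc k)) + 2 * nsq (\<lambda>x. gk k x - g x)) sequentially"
    proof (intro always_eventually allI)
      fix k
      have "nsq (\<lambda>x. phi k x - g x) \<le> 2 * nsq (\<lambda>x. phi k x - gk k x) + 2 * nsq (\<lambda>x. gk k x - g x)"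
        by (rule nsq_diff_tri[OF phis gks gs])
      also have "nsq (\<lambda>x. phi k x - gk k x) \<le> 1 / real (Suc k)" using nn[of k] unfolding phi_def by simp
      finally show "nsq (\<lambda>x. phi k x - g x) \<le> 2 * (1 / real (Suc k)) + 2 * nsq (\<lambda>x. gk k x - g x)" by simp
    qed
    show "(\<lambda>k. 0::real) \<longlonglongrightarrow> 0" by simp
    have "(\<lambda>k. 2 * (1 / real (Suc k)) + 2 * nsq (\<lambda>x. gk k x - g x)) \<longlonglongrightarrow> 2 * 0 + 2 * 0"
      by (intro tendsto_intros gkconv LIMSEQ_Suc[OF lim_inverse_n'])
    then show "(\<lambda>k. 2 * (1 / real (Suc k)) + 2 * nsq (\<lambda>x. gk k x - g x)) \<longlonglongrightarrow> 0" by simp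
  qed
  moreover have "phi k x = 0" if "R + 1 < \<bar>x\<bar>" for k x unfolding phi_def using Phi(2) that by blast
  ultimately show ?thesis using nphi by blast
qed


lemma ind_sq_int: "sq_int (\<lambda>x. complex_of_real (indicator {-R..R} x))"
proof (rule sq_intI)
  show "(\<lambda>x. complex_of_real (indicator {-R..R} x)) \<in> borel_measurable borel" by measurable
  have "integrable lborel (indicator {-R..R} :: real \<Rightarrow> real)"
    by (intro integrable_real_indicator) (auto simp: emeasure_lborel_Icc_eq)
  moreover have "(cmod (complex_of_real (indicator {-R..R} x)))\<^sup>2 = indicator {-R..R} x" for x
    by (simp add: indicator_def)
  ultimately show "integrable lborel (\<lambda>x. (cmod (complex_of_real (indicator {-R..R} x)))\<^sup>2)" by simp
qed

lemma L1_le_L2_support: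
  assumes d: "sq_int d" and R: "\<And>x. R < \<bar>x\<bar> \<Longrightarrow> d x = 0"
  shows "(LINT x|lborel. cmod (d x)) \<le> sqrt (nsq (\<lambda>x. complex_of_real (indicator {-R..R} x))) * sqrt (nsq d)"
proof -
  have "cmod (complex_of_real (indicator {-R..R} x)) * cmod (d x) = cmod (d x)" for x
    using R[of x] by (cases "R < \<bar>x\<bar>") (auto simp: indicator_def)
  then have "(\<lambda>x. cmod (complex_of_real (indicator {-R..R} x)) * cmod (d x)) = (\<lambda>x. cmod (d x))" by auto
  then show ?thesis using cauchy_schwarz_L2[OF ind_sq_int d, of R] by (simp only:)
qed

context
  fixes sg h :: real
  assumes hpos: "h > 0" and sg2: "sg\<^sup>2 = 1"
begin

lemma parseval_cs:
  assumes g: "cs g"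
  shows "sq_int (FT sg h g) \<and> nsq (FT sg h g) = nsq g"
proof -
  obtain phi R' where nphi: "\<And>k. nice (phi k)" and phiR: "\<And>k x. R' < \<bar>x\<bar> \<Longrightarrow> phi k x = 0"
    and conv: "L2conv phi g"
    using density_cs[OF g] by blast
  obtain Rg where Rg: "\<And>x. Rg < \<bar>x\<bar> \<Longrightarrow> g x = 0" and gs: "sq_int g" using g cs_def by auto
  define R0 where "R0 = max R' Rg"
  have gi: "integrable lborel g" by (rule cs_integrable[OF g])
  have gm[measurable]: "g \<in> borel_measurable borel" using gs by measurable
  have phis: "sq_int (phi k)" for k using nice_cs[OF nphi] cs_def by auto
  have phii: "integrable lborel (phi k)" for k by (rule cs_integrable[OF nice_cs[OF nphi]])
  have Pphi: "sq_int (FT sg h (phi k)) \<and> nsq (FT sg h (phi k)) = nsq (phi k)" for k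
    by (rule parseval_nice[OF hpos sg2 nphi])
  have Pdiff: "nsq (\<lambda>p. FT sg h (phi k) p - FT sg h (phi j) p) = nsq (\<lambda>x. phi k x - phi j x)" for k j
  proof -
    have "FT sg h (phi k) p - FT sg h (phi j) p = FT sg h (\<lambda>x. phi k x - phi j x) p" for p
      by (rule FT_diff[OF hpos phii phii, symmetric])
    then have "(\<lambda>p. FT sg h (phi k) p - FT sg h (phi j) p) = FT sg h (\<lambda>x. phi k x - phi j x)" by auto
    then show ?thesis using parseval_nice[OF hpos sg2 nice_diff[OF nphi nphi]] by simp
  qed
  define K where "K = sqrt (nsq (\<lambda>x. complex_of_real (indicator {-R0..R0} x)))"
  have ptw: "(\<lambda>k. FT sg h (phi k) p) \<longlonglongrightarrow> FT sg h g p" for p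
  proof -
    have b: "cmod (FT sg h (phi k) p - FT sg h g p) \<le> K * sqrt (nsq (\<lambda>x. phi k x - g x)) / sqrt (2 * pi * h)" for k
    proof -
      have "FT sg h (phi k) p - FT sg h g p = FT sg h (\<lambda>x. phi k x - g x) p"
        by (rule FT_diff[OF hpos phii gi, symmetric])
      also have "cmod \<dots> \<le> (LINT x|lborel. cmod (phi k x - g x)) / sqrt (2 * pi * h)"
        by (rule FT_bound[OF hpos]) (use phii gi in simp)
      also have "(LINT x|lborel. cmod (phi k x - g x)) \<le> K * sqrt (nsq (\<lambda>x. phi k x - g x))"
        unfolding K_def
        by (rule L1_le_L2_support[OF sq_int_diff[OF phis gs]]) (use phiR Rg in \<open>auto simp: R0_def\<close>)
      finally show ?thesis using hpos by (simp add: divide_right_mono)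
    qed
    have "(\<lambda>k. K * sqrt (nsq (\<lambda>x. phi k x - g x)) / sqrt (2 * pi * h)) \<longlonglongrightarrow> K * sqrt 0 / sqrt (2 * pi * h)"
      using conv hpos unfolding L2conv_def by (intro tendsto_intros) auto
    then have g0: "(\<lambda>k. K * sqrt (nsq (\<lambda>x. phi k x - g x)) / sqrt (2 * pi * h)) \<longlonglongrightarrow> 0" by simp
    have "(\<lambda>k. FT sg h (phi k) p - FT sg h g p) \<longlonglongrightarrow> 0"
      by (rule Lim_null_comparison[OF _ g0]) (rule always_eventually, rule allI, rule b)
    then show ?thesis by (simp add: LIM_zero_iff)
  qed
  have FTm[measurable]: "FT sg h g \<in> borel_measurable borel" by (rule FT_meas[OF gm])
  have tail: "sq_int (\<lambda>p. FT sg h g p - FT sg h (phi j) p) \<and>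
      nsq (\<lambda>p. FT sg h g p - FT sg h (phi j) p) \<le> 2 * (1 / real (Suc j)) + 2 * nsq (\<lambda>x. g x - phi j x)" for j
  proof (rule L2_fatou[where u="\<lambda>k p. FT sg h (phi k) p - FT sg h (phi j) p"])
    show "sq_int (\<lambda>p. FT sg h (phi k) p - FT sg h (phi j) p)" for k
      using Pphi by (intro sq_int_diff) auto
    show "(\<lambda>p. FT sg h g p - FT sg h (phi j) p) \<in> borel_measurable borel"
      using FT_meas[OF nice_meas[OF nphi[of j]]] by measurable
    show "AE p in lborel. (\<lambda>k. FT sg h (phi k) p - FT sg h (phi j) p) \<longlonglongrightarrow> FT sg h g p - FT sg h (phi j) p"
      by (intro AE_I2 tendsto_intros ptw)
    have "eventually (\<lambda>k. nsq (\<lambda>x. phi k x - g x) < 1 / real (Suc j)) sequentially"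
      using conv unfolding L2conv_def by (intro order_tendstoD) auto
    then show "eventually (\<lambda>k. nsq (\<lambda>p. FT sg h (phi k) p - FT sg h (phi j) p) \<le> 2 * (1 / real (Suc j)) + 2 * nsq (\<lambda>x. g x - phi j x)) sequentially"
    proof (rule eventually_mono)
      fix k assume k: "nsq (\<lambda>x. phi k x - g x) < 1 / real (Suc j)"
      have "nsq (\<lambda>p. FT sg h (phi k) p - FT sg h (phi j) p) = nsq (\<lambda>x. phi k x - phi j x)" by (rule Pdiff)
      also have "\<dots> \<le> 2 * nsq (\<lambda>x. phi k x - g x) + 2 * nsq (\<lambda>x. g x - phi j x)"
        by (rule nsq_diff_tri[OF phis gs phis])
      finally show "nsq (\<lambda>p. FT sg h (phi k) p - FT sg h (phi j) p) \<le> 2 * (1 / real (Suc j)) + 2 * nsq (\<lambda>x. g x - phi j x)"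
        using k by simp
    qed
  qed
  have FTs: "sq_int (FT sg h g)"
    using sq_int_add[OF conjunct1[OF tail[of 0]] conjunct1[OF Pphi[of 0]]] by simp
  have conv2: "L2conv (\<lambda>j. FT sg h (phi j)) (FT sg h g)" unfolding L2conv_def
  proof (rule tendsto_sandwich[where f="\<lambda>k. 0" and h="\<lambda>j. 2 * (1 / real (Suc j)) + 2 * nsq (\<lambda>x. g x - phi j x)"])
    show "eventually (\<lambda>j. 0 \<le> nsq (\<lambda>x. FT sg h (phi j) x - FT sg h g x)) sequentially" by (simp add: nsq_nonneg)
    show "eventually (\<lambda>j. nsq (\<lambda>x. FT sg h (phi j) x - FT sg h g x) \<le> 2 * (1 / real (Suc j)) + 2 * nsq (\<lambda>x. g x - phi j x)) sequentially"
    proof (intro always_eventually allI)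
      fix j
      show "nsq (\<lambda>x. FT sg h (phi j) x - FT sg h g x) \<le> 2 * (1 / real (Suc j)) + 2 * nsq (\<lambda>x. g x - phi j x)"
        using tail[of j] nsq_diff_sym[of "FT sg h (phi j)" "FT sg h g"] by simp
    qed
    show "(\<lambda>k. 0::real) \<longlonglongrightarrow> 0" by simp
    have "(\<lambda>j. 2 * (1 / real (Suc j)) + 2 * nsq (\<lambda>x. g x - phi j x)) \<longlonglongrightarrow> 2 * 0 + 2 * 0"
      using conv unfolding L2conv_def nsq_diff_sym[of g]
      by (intro tendsto_intros LIMSEQ_Suc[OF lim_inverse_n'])
    then show "(\<lambda>j. 2 * (1 / real (Suc j)) + 2 * nsq (\<lambda>x. g x - phi j x)) \<longlonglongrightarrow> 0" by simp
  qed
  have "(\<lambda>j. nsq (FT sg h (phi j))) \<longlonglongrightarrow> nsq (FT sg h g)"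
    by (rule L2_norm_cont[OF _ FTs conv2]) (use Pphi in auto)
  moreover have "(\<lambda>j. nsq (FT sg h (phi j))) \<longlonglongrightarrow> nsq g"
    using L2_norm_cont[OF phis gs conv] Pphi by simp
  ultimately have "nsq (FT sg h g) = nsq g" by (rule LIMSEQ_unique)
  then show ?thesis using FTs by simp
qed

end


lemma tr_conv:
  assumes f: "sq_int f" and R: "filterlim R at_top sequentially"
  shows "L2conv (\<lambda>n. tr (R n) f) f"
proof -
  have fm[measurable]: "f \<in> borel_measurable borel" using f by measurable
  have "(\<lambda>n. LINT x|lborel. (cmod (tr (R n) f x - f x))\<^sup>2) \<longlonglongrightarrow> (LINT (x::real)|lborel. (0::real))"
  proof (rule integral_dominated_convergence[where w="\<lambda>x. (cmod (f x))\<^sup>2"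
        and f="\<lambda>x::real. 0::real" and s="\<lambda>n x. (cmod (tr (R n) f x - f x))\<^sup>2"])
    show "(\<lambda>x::real. 0::real) \<in> borel_measurable lborel" by simp
    show "(\<lambda>x. (cmod (tr (R n) f x - f x))\<^sup>2) \<in> borel_measurable lborel" for n by measurable
    show "integrable lborel (\<lambda>x. (cmod (f x))\<^sup>2)" by (rule sq_intD2[OF f])
    show "AE x in lborel. (\<lambda>n. (cmod (tr (R n) f x - f x))\<^sup>2) \<longlonglongrightarrow> 0"
    proof (intro AE_I2)
      fix x
      have "eventually (\<lambda>n. R n \<ge> \<bar>x\<bar>) sequentially"
        using R by (simp add: filterlim_at_top)
      then have "eventually (\<lambda>n. (cmod (tr (R n) f x - f x))\<^sup>2 = 0) sequentially"
        by (rule eventually_mono) (auto simp: tr_def indicator_def)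
      then show "(\<lambda>n. (cmod (tr (R n) f x - f x))\<^sup>2) \<longlonglongrightarrow> 0"
        by (rule tendsto_eventually)
    qed
    show "AE x in lborel. norm ((cmod (tr (R n) f x - f x))\<^sup>2) \<le> (cmod (f x))\<^sup>2" for n
      by (intro AE_I2) (auto simp: tr_def indicator_def)
  qed
  then show ?thesis unfolding L2conv_def nsq_def by simp
qed

lemma nat_at_top: "filterlim (\<lambda>n::nat. real n) at_top sequentially"
  by (rule filterlim_real_sequentially)

context
  fixes sg h :: real
  assumes hpos: "h > 0" and sg2: "sg\<^sup>2 = 1"
begin

lemma FT_tr_sq: "sq_int f \<Longrightarrow> sq_int (FT sg h (tr R f))"
  using parseval_cs[OF hpos sg2 tr_cs] by blast

lemma FT_tr_diff:
  assumes f: "sq_int f"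
  shows "nsq (\<lambda>p. FT sg h (tr R f) p - FT sg h (tr S f) p) = nsq (\<lambda>x. tr R f x - tr S f x)"
proof -
  have i: "integrable lborel (tr R f)" "integrable lborel (tr S f)"
    using cs_integrable[OF tr_cs[OF f]] by auto
  have "(\<lambda>p. FT sg h (tr R f) p - FT sg h (tr S f) p) = FT sg h (\<lambda>x. tr R f x - tr S f x)"
    using FT_diff[OF hpos i] by auto
  then show ?thesis using parseval_cs[OF hpos sg2 cs_diff[OF tr_cs[OF f] tr_cs[OF f]]] by simp
qed

lemma FT_tr_window:
  assumes f: "sq_int f" and R: "filterlim R at_top sequentially" and S: "filterlim S at_top sequentially"
  shows "(\<lambda>n. nsq (\<lambda>p. FT sg h (tr (R n) f) p - FT sg h (tr (S n) f) p)) \<longlonglongrightarrow> 0"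
proof (rule tendsto_sandwich[where f="\<lambda>n. 0" and h="\<lambda>n. 2 * nsq (\<lambda>x. tr (R n) f x - f x) + 2 * nsq (\<lambda>x. tr (S n) f x - f x)"])
  show "eventually (\<lambda>n. 0 \<le> nsq (\<lambda>p. FT sg h (tr (R n) f) p - FT sg h (tr (S n) f) p)) sequentially"
    by (simp add: nsq_nonneg)
  show "eventually (\<lambda>n. nsq (\<lambda>p. FT sg h (tr (R n) f) p - FT sg h (tr (S n) f) p)
      \<le> 2 * nsq (\<lambda>x. tr (R n) f x - f x) + 2 * nsq (\<lambda>x. tr (S n) f x - f x)) sequentially"
  proof (intro always_eventually allI)
    fix n
    have "nsq (\<lambda>p. FT sg h (tr (R n) f) p - FT sg h (tr (S n) f) p) = nsq (\<lambda>x. tr (R n) f x - tr (S n) f x)"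
      by (rule FT_tr_diff[OF f])
    also have "\<dots> \<le> 2 * nsq (\<lambda>x. tr (R n) f x - f x) + 2 * nsq (\<lambda>x. f x - tr (S n) f x)"
      by (rule nsq_diff_tri[OF tr_sq_int[OF f] f tr_sq_int[OF f]])
    finally show "nsq (\<lambda>p. FT sg h (tr (R n) f) p - FT sg h (tr (S n) f) p)
      \<le> 2 * nsq (\<lambda>x. tr (R n) f x - f x) + 2 * nsq (\<lambda>x. tr (S n) f x - f x)"
      using nsq_diff_sym[of f "tr (S n) f"] by simp
  qed
  show "(\<lambda>n. 0::real) \<longlonglongrightarrow> 0" by simp
  have "(\<lambda>n. 2 * nsq (\<lambda>x. tr (R n) f x - f x) + 2 * nsq (\<lambda>x. tr (S n) f x - f x)) \<longlonglongrightarrow> 2 * 0 + 2 * 0"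
    using tr_conv[OF f R] tr_conv[OF f S] unfolding L2conv_def by (intro tendsto_intros)
  then show "(\<lambda>n. 2 * nsq (\<lambda>x. tr (R n) f x - f x) + 2 * nsq (\<lambda>x. tr (S n) f x - f x)) \<longlonglongrightarrow> 0" by simp
qed

lemma plancherel_exists:
  assumes f: "sq_int f"
  shows "\<exists>H. sq_int H \<and> L2conv (\<lambda>n. FT sg h (tr (real n) f)) H"
proof (rule L2_complete)
  show "sq_int (FT sg h (tr (real n) f))" for n by (rule FT_tr_sq[OF f])
  fix e :: real assume e: "e > 0"
  have c: "(\<lambda>n. nsq (\<lambda>x. tr (real n) f x - f x)) \<longlonglongrightarrow> 0"
    using tr_conv[OF f nat_at_top] unfolding L2conv_def .
  then have "eventually (\<lambda>n. nsq (\<lambda>x. tr (real n) f x - f x) < e / 4) sequentially"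
    using e by (intro order_tendstoD) auto
  then obtain N where N: "\<And>n. n \<ge> N \<Longrightarrow> nsq (\<lambda>x. tr (real n) f x - f x) < e / 4"
    by (auto simp: eventually_sequentially)
  show "\<exists>N. \<forall>m\<ge>N. \<forall>n\<ge>N. nsq (\<lambda>x. FT sg h (tr (real m) f) x - FT sg h (tr (real n) f) x) < e"
  proof (intro exI allI impI)
    fix m n assume m: "m \<ge> N" and n: "n \<ge> N"
    have "nsq (\<lambda>x. FT sg h (tr (real m) f) x - FT sg h (tr (real n) f) x) = nsq (\<lambda>x. tr (real m) f x - tr (real n) f x)"
      by (rule FT_tr_diff[OF f])
    also have "\<dots> \<le> 2 * nsq (\<lambda>x. tr (real m) f x - f x) + 2 * nsq (\<lambda>x. f x - tr (real n) f x)"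
      by (rule nsq_diff_tri[OF tr_sq_int[OF f] f tr_sq_int[OF f]])
    also have "\<dots> < 2 * (e / 4) + 2 * (e / 4)"
      using N[OF m] N[OF n] nsq_diff_sym[of f "tr (real n) f"] by simp
    finally show "nsq (\<lambda>x. FT sg h (tr (real m) f) x - FT sg h (tr (real n) f) x) < e" by simp
  qed
qed

lemma plancherel_spec:
  assumes f: "sq_int f"
  shows "sq_int (plancherel sg h f) \<and> L2conv (\<lambda>n. FT sg h (tr (real n) f)) (plancherel sg h f)"
proof -
  have eq: "L2conv (\<lambda>n. FT sg h (tr (real n) f)) H \<longleftrightarrow>
      (\<lambda>n. LINT p|lborel. (cmod (H p - ft_trunc sg h f (real n) p))\<^sup>2) \<longlonglongrightarrow> 0" for H
    unfolding L2conv_def nsq_def ft_trunc_FT by (simp add: norm_minus_commute)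
  obtain H where "sq_int H \<and> L2conv (\<lambda>n. FT sg h (tr (real n) f)) H" using plancherel_exists[OF f] by blast
  then have "\<exists>H. sq_int H \<and> (\<lambda>n. LINT p|lborel. (cmod (H p - ft_trunc sg h f (real n) p))\<^sup>2) \<longlonglongrightarrow> 0"
    using eq by blast
  from someI_ex[OF this] show ?thesis unfolding plancherel_def eq by blast
qed

lemma plancherel_sq: "sq_int f \<Longrightarrow> sq_int (plancherel sg h f)"
  using plancherel_spec by blast

lemma plancherel_window:
  assumes f: "sq_int f" and R: "filterlim R at_top sequentially"
  shows "L2conv (\<lambda>n. FT sg h (tr (R n) f)) (plancherel sg h f)"
  unfolding L2conv_def
proof (rule tendsto_sandwich[where f="\<lambda>n. 0" and h="\<lambda>n. 2 * nsq (\<lambda>p. FT sg h (tr (R n) f) p - FT sg h (tr (real n) f) p) + 2 * nsq (\<lambda>p. FT sg h (tr (real n) f) p - plancherel sg h f p)"])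
  have P: "sq_int (plancherel sg h f)" and C: "L2conv (\<lambda>n. FT sg h (tr (real n) f)) (plancherel sg h f)"
    using plancherel_spec[OF f] by auto
  show "eventually (\<lambda>n. 0 \<le> nsq (\<lambda>x. FT sg h (tr (R n) f) x - plancherel sg h f x)) sequentially"
    by (simp add: nsq_nonneg)
  show "eventually (\<lambda>n. nsq (\<lambda>x. FT sg h (tr (R n) f) x - plancherel sg h f x)
     \<le> 2 * nsq (\<lambda>p. FT sg h (tr (R n) f) p - FT sg h (tr (real n) f) p) + 2 * nsq (\<lambda>p. FT sg h (tr (real n) f) p - plancherel sg h f p)) sequentially"
    by (intro always_eventually allI nsq_diff_tri FT_tr_sq f P)
  show "(\<lambda>n. 0::real) \<longlonglongrightarrow> 0" by simp
  have "(\<lambda>n. 2 * nsq (\<lambda>p. FT sg h (tr (R n) f) p - FT sg h (tr (real n) f) p) + 2 * nsq (\<lambda>p. FT sg h (tr (real n) f) p - plancherel sg h f p)) \<longlonglongrightarrow> 2 * 0 + 2 * 0"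
    using FT_tr_window[OF f R nat_at_top] C unfolding L2conv_def by (intro tendsto_intros)
  then show "(\<lambda>n. 2 * nsq (\<lambda>p. FT sg h (tr (R n) f) p - FT sg h (tr (real n) f) p) + 2 * nsq (\<lambda>p. FT sg h (tr (real n) f) p - plancherel sg h f p)) \<longlonglongrightarrow> 0"
    by simp
qed

lemma plancherel_iso:
  assumes f: "sq_int f"
  shows "nsq (plancherel sg h f) = nsq f"
proof -
  have P: "sq_int (plancherel sg h f)" and C: "L2conv (\<lambda>n. FT sg h (tr (real n) f)) (plancherel sg h f)"
    using plancherel_spec[OF f] by auto
  have "(\<lambda>n. nsq (FT sg h (tr (real n) f))) \<longlonglongrightarrow> nsq (plancherel sg h f)"
    by (rule L2_norm_cont[OF FT_tr_sq[OF f] P C])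
  moreover have "nsq (FT sg h (tr (real n) f)) = nsq (tr (real n) f)" for n
    using parseval_cs[OF hpos sg2 tr_cs[OF f]] by simp
  moreover have "(\<lambda>n. nsq (tr (real n) f)) \<longlonglongrightarrow> nsq f"
    by (rule L2_norm_cont[OF tr_sq_int[OF f] f tr_conv[OF f nat_at_top]])
  ultimately show ?thesis using LIMSEQ_unique by force
qed

lemma plancherel_cong:
  assumes f: "sq_int f" and g: "sq_int g" and fg: "AE x in lborel. f x = g x"
  shows "plancherel sg h f = plancherel sg h g"
proof -
  have "ft_trunc sg h f R p = ft_trunc sg h g R p" for R p
  proof -
    have fm[measurable]: "f \<in> borel_measurable borel" and gm[measurable]: "g \<in> borel_measurable borel"
      using f g by measurable
    have "(CLINT x|lborel. indicator {-R..R} x * (exp (\<i> * of_real (sg * p * x / h)) * f x))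
        = (CLINT x|lborel. indicator {-R..R} x * (exp (\<i> * of_real (sg * p * x / h)) * g x))"
      by (rule integral_cong_AE) (use fg in \<open>auto elim: AE_mp\<close>)
    then show ?thesis unfolding ft_trunc_def by simp
  qed
  then show ?thesis unfolding plancherel_def by simp
qed

lemma L2conv_lin:
  assumes u: "\<And>n. sq_int (u n)" and v: "\<And>n. sq_int (v n)" and U: "sq_int U" and V: "sq_int V"
    and cu: "L2conv u U" and cv: "L2conv v V"
  shows "L2conv (\<lambda>n x. a * u n x + b * v n x) (\<lambda>x. a * U x + b * V x)"
  unfolding L2conv_def
proof (rule tendsto_sandwich[where f="\<lambda>n. 0" and h="\<lambda>n. 2 * ((cmod a)\<^sup>2 * nsq (\<lambda>x. u n x - U x)) + 2 * ((cmod b)\<^sup>2 * nsq (\<lambda>x. v n x - V x))"])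
  show "eventually (\<lambda>n. 0 \<le> nsq (\<lambda>x. a * u n x + b * v n x - (a * U x + b * V x))) sequentially"
    by (simp add: nsq_nonneg)
  have sc: "nsq (\<lambda>x. c * w x) = (cmod c)\<^sup>2 * nsq w" for c w
    unfolding nsq_def by (simp add: norm_mult power_mult_distrib)
  show "eventually (\<lambda>n. nsq (\<lambda>x. a * u n x + b * v n x - (a * U x + b * V x))
      \<le> 2 * ((cmod a)\<^sup>2 * nsq (\<lambda>x. u n x - U x)) + 2 * ((cmod b)\<^sup>2 * nsq (\<lambda>x. v n x - V x))) sequentially"
  proof (intro always_eventually allI)
    fix n
    have "(\<lambda>x. a * u n x + b * v n x - (a * U x + b * V x)) = (\<lambda>x. a * (u n x - U x) + b * (v n x - V x))"
      by (auto simp: algebra_simps)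
    moreover have "nsq (\<lambda>x. a * (u n x - U x) + b * (v n x - V x)) \<le> 2 * nsq (\<lambda>x. a * (u n x - U x)) + 2 * nsq (\<lambda>x. b * (v n x - V x))"
      by (intro nsq_add_le2 sq_int_cmult sq_int_diff u v U V)
    ultimately show "nsq (\<lambda>x. a * u n x + b * v n x - (a * U x + b * V x))
      \<le> 2 * ((cmod a)\<^sup>2 * nsq (\<lambda>x. u n x - U x)) + 2 * ((cmod b)\<^sup>2 * nsq (\<lambda>x. v n x - V x))"
      by (simp add: sc)
  qed
  show "(\<lambda>n. 0::real) \<longlonglongrightarrow> 0" by simp
  have "(\<lambda>n. 2 * ((cmod a)\<^sup>2 * nsq (\<lambda>x. u n x - U x)) + 2 * ((cmod b)\<^sup>2 * nsq (\<lambda>x. v n x - V x))) \<longlonglongrightarrow> 2 * ((cmod a)\<^sup>2 * 0) + 2 * ((cmod b)\<^sup>2 * 0)"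
    using cu cv unfolding L2conv_def by (intro tendsto_intros)
  then show "(\<lambda>n. 2 * ((cmod a)\<^sup>2 * nsq (\<lambda>x. u n x - U x)) + 2 * ((cmod b)\<^sup>2 * nsq (\<lambda>x. v n x - V x))) \<longlonglongrightarrow> 0"
    by simp
qed

lemma plancherel_lin:
  assumes f: "sq_int f" and g: "sq_int g"
  shows "AE p in lborel. plancherel sg h (\<lambda>x. a * f x + b * g x) p = a * plancherel sg h f p + b * plancherel sg h g p"
proof (rule L2_unique[where u="\<lambda>n. FT sg h (tr (real n) (\<lambda>x. a * f x + b * g x))"])
  have fg: "sq_int (\<lambda>x. a * f x + b * g x)" by (rule sq_int_lin[OF f g])
  show "sq_int (FT sg h (tr (real n) (\<lambda>x. a * f x + b * g x)))" for n by (rule FT_tr_sq[OF fg])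
  show "sq_int (plancherel sg h (\<lambda>x. a * f x + b * g x))" by (rule plancherel_sq[OF fg])
  show "sq_int (\<lambda>p. a * plancherel sg h f p + b * plancherel sg h g p)"
    by (intro sq_int_lin plancherel_sq f g)
  show "L2conv (\<lambda>n. FT sg h (tr (real n) (\<lambda>x. a * f x + b * g x))) (plancherel sg h (\<lambda>x. a * f x + b * g x))"
    using plancherel_spec[OF fg] by blast
  have eq: "FT sg h (tr (real n) (\<lambda>x. a * f x + b * g x)) = (\<lambda>p. a * FT sg h (tr (real n) f) p + b * FT sg h (tr (real n) g) p)" for n
  proof -
    have "tr (real n) (\<lambda>x. a * f x + b * g x) = (\<lambda>x. a * tr (real n) f x + b * tr (real n) g x)"
      unfolding tr_def by (auto simp: algebra_simps)
    then show ?thesis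
      using FT_lin[OF hpos cs_integrable[OF tr_cs[OF f]] cs_integrable[OF tr_cs[OF g]]] by auto
  qed
  show "L2conv (\<lambda>n. FT sg h (tr (real n) (\<lambda>x. a * f x + b * g x))) (\<lambda>p. a * plancherel sg h f p + b * plancherel sg h g p)"
    unfolding eq
    by (rule L2conv_lin) (use plancherel_spec[OF f] plancherel_spec[OF g] FT_tr_sq[OF f] FT_tr_sq[OF g] in auto)
qed

end


lemma cmod_diff_sq: "(cmod (a - b))\<^sup>2 = (cmod a)\<^sup>2 + (cmod b)\<^sup>2 - 2 * Re (a * cnj b)"
  unfolding cmod_power2 by (simp add: power2_diff algebra_simps)

lemma nsq_expand:
  assumes a: "sq_int a" and b: "sq_int b"
  shows "nsq (\<lambda>x. a x - b x) = nsq a + nsq b - 2 * Re (CLINT x|lborel. a x * cnj (b x))"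
proof -
  have ia: "integrable lborel (\<lambda>x. (cmod (a x))\<^sup>2)" and ib: "integrable lborel (\<lambda>x. (cmod (b x))\<^sup>2)"
    using a b by (auto intro: sq_intD2)
  have iab: "integrable lborel (\<lambda>x. a x * cnj (b x))" by (rule integrable_inner[OF a b])
  have iabR: "integrable lborel (\<lambda>x. Re (a x * cnj (b x)))"
    using integrable_bounded_linear[OF bounded_linear_Re iab] .
  define r where "r x = Re (a x * cnj (b x))" for x
  have ir: "integrable lborel r" unfolding r_def by (rule iabR)
  have "nsq (\<lambda>x. a x - b x) = (LINT x|lborel. (cmod (a x))\<^sup>2 + (cmod (b x))\<^sup>2 - 2 * r x)"
    unfolding nsq_def cmod_diff_sq r_def ..
  also have "\<dots> = nsq a + nsq b - 2 * (LINT x|lborel. r x)"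
    unfolding nsq_def using ia ib ir by simp
  also have "(LINT x|lborel. r x) = Re (CLINT x|lborel. a x * cnj (b x))"
    unfolding r_def by (rule integral_bounded_linear[OF bounded_linear_Re]) (rule iab)
  finally show ?thesis .
qed

lemma inner_self: "(CLINT x|lborel. a x * cnj (a x)) = complex_of_real (nsq a)"
proof -
  have "a x * cnj (a x) = complex_of_real ((cmod (a x))\<^sup>2)" for x
    by (rule complex_norm_square[symmetric])
  then show ?thesis unfolding nsq_def by (simp only: Bochner_Integration.integral_complex_of_real)
qed

context
  fixes sg h :: real
  assumes hpos: "h > 0" and sg2: "sg\<^sup>2 = 1"
begin

lemma sg2m: "(-sg)\<^sup>2 = 1" using sg2 by simp

lemma plancherel_inv:
  assumes f: "sq_int f"
  shows "AE x in lborel. plancherel (-sg) h (plancherel sg h f) x = f x"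
proof -
  define u where "u = plancherel sg h f"
  define v where "v = plancherel (-sg) h u"
  have us: "sq_int u" and uc: "L2conv (\<lambda>n. FT sg h (tr (real n) f)) u"
    using plancherel_spec[OF hpos sg2 f] unfolding u_def by auto
  have vs: "sq_int v" and vc: "L2conv (\<lambda>n. FT (-sg) h (tr (real n) u)) v"
    using plancherel_spec[OF hpos sg2m us] unfolding v_def by auto
  have nu: "nsq u = nsq f" unfolding u_def by (rule plancherel_iso[OF hpos sg2 f])
  have nv: "nsq v = nsq u" unfolding v_def by (rule plancherel_iso[OF hpos sg2m us])
  have step: "(CLINT x|lborel. FT (-sg) h (tr (real n) u) x * cnj (f x)) = (CLINT x|lborel. tr (real n) u x * cnj (u x))" for n
  proof -
    have adj: "(CLINT x|lborel. FT (-sg) h (tr (real n) u) x * cnj (tr (real m) f x))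
        = (CLINT x|lborel. tr (real n) u x * cnj (FT sg h (tr (real m) f) x))" for m
      using FT_adjoint[OF hpos cs_integrable[OF tr_cs[OF us]] cs_integrable[OF tr_cs[OF f]], of "-sg" "real n" "real m"]
      by simp
    have l1: "(\<lambda>m. CLINT x|lborel. FT (-sg) h (tr (real n) u) x * cnj (tr (real m) f x))
        \<longlonglongrightarrow> (CLINT x|lborel. FT (-sg) h (tr (real n) u) x * cnj (f x))"
      by (rule L2_inner_cont2[OF tr_sq_int[OF f] f FT_tr_sq[OF hpos sg2m us] tr_conv[OF f nat_at_top]])
    have l2: "(\<lambda>m. CLINT x|lborel. tr (real n) u x * cnj (FT sg h (tr (real m) f) x))
        \<longlonglongrightarrow> (CLINT x|lborel. tr (real n) u x * cnj (u x))"
      by (rule L2_inner_cont2[OF FT_tr_sq[OF hpos sg2 f] us tr_sq_int[OF us] uc])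
    show ?thesis using LIMSEQ_unique[OF l1 l2[folded adj]] .
  qed
  have l3: "(\<lambda>n. CLINT x|lborel. FT (-sg) h (tr (real n) u) x * cnj (f x)) \<longlonglongrightarrow> (CLINT x|lborel. v x * cnj (f x))"
    by (rule L2_inner_cont[OF FT_tr_sq[OF hpos sg2m us] vs f vc])
  have l4: "(\<lambda>n. CLINT x|lborel. tr (real n) u x * cnj (u x)) \<longlonglongrightarrow> (CLINT x|lborel. u x * cnj (u x))"
    by (rule L2_inner_cont[OF tr_sq_int[OF us] us us tr_conv[OF us nat_at_top]])
  have inner: "(CLINT x|lborel. v x * cnj (f x)) = complex_of_real (nsq u)"
    using LIMSEQ_unique[OF l3[unfolded step] l4] inner_self[of u] by simp
  have "nsq (\<lambda>x. v x - f x) = 0"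
    using nsq_expand[OF vs f] inner nu nv by simp
  from nsq_zero_AE[OF sq_int_diff[OF vs f] this]
  show ?thesis unfolding v_def u_def by auto
qed

end


lemma dil_sq:
  fixes g :: wf and c :: real
  assumes g: "sq_int g" and c: "c \<noteq> 0"
  shows "sq_int (\<lambda>x. g (c * x)) \<and> nsq (\<lambda>x. g (c * x)) = nsq g / \<bar>c\<bar>"
proof -
  have gm[measurable]: "g \<in> borel_measurable borel" using g by measurable
  have i: "integrable lborel (\<lambda>x. (cmod (g (0 + c * x)))\<^sup>2)"
    using lborel_integrable_real_affine[OF sq_intD2[OF g] c, of 0] by simp
  have "nsq g = \<bar>c\<bar> *\<^sub>R (LINT x|lborel. (cmod (g (0 + c * x)))\<^sup>2)"
    unfolding nsq_def by (rule lborel_integral_real_affine[OF c])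
  then have "nsq (\<lambda>x. g (c * x)) = nsq g / \<bar>c\<bar>" using c unfolding nsq_def by simp
  moreover have "sq_int (\<lambda>x. g (c * x))" using i by (intro sq_intI) auto
  ultimately show ?thesis by simp
qed

lemma AE_dil:
  fixes a b :: wf and c :: real
  assumes a[measurable]: "a \<in> borel_measurable borel" and b[measurable]: "b \<in> borel_measurable borel"
    and c: "c \<noteq> 0" and ab: "AE x in lborel. a x = (b x :: complex)"
  shows "AE x in lborel. a (c * x) = b (c * x)"
proof -
  have "Measurable.pred borel (\<lambda>x. a x = b x)" by measurable
  from AE_borel_affine[OF c this ab, of 0] show ?thesis by simp
qed

lemma Sdil_alt: "Sdil f = (\<lambda>x. complex_of_real (1 / sqrt 2) * f ((1/2) * x))"
  unfolding Sdil_def by simp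

lemma Sdil_sq:
  assumes f: "sq_int f" shows "sq_int (Sdil f) \<and> nsq (Sdil f) = nsq f"
proof -
  have d: "sq_int (\<lambda>x. f ((1/2) * x)) \<and> nsq (\<lambda>x. f ((1/2) * x)) = nsq f / \<bar>1/2\<bar>"
    by (rule dil_sq[OF f]) simp
  have s: "sq_int (Sdil f)" unfolding Sdil_alt by (rule sq_int_cmult) (use d in auto)
  have pt: "(cmod (complex_of_real (1 / sqrt 2) * z))\<^sup>2 = (1/2) * (cmod z)\<^sup>2" for z
    by (simp add: norm_divide power_divide)
  have "nsq (Sdil f) = (LINT x|lborel. (1/2) * (cmod (f ((1/2) * x)))\<^sup>2)"
    unfolding Sdil_alt nsq_def pt ..
  also have "\<dots> = (1/2) * nsq (\<lambda>x. f ((1/2) * x))" unfolding nsq_def by simp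
  also have "\<dots> = nsq f" using d by simp
  finally show ?thesis using s by simp
qed

lemma Sdil_AE:
  assumes a[measurable]: "a \<in> borel_measurable borel" and b[measurable]: "b \<in> borel_measurable borel"
    and ab: "AE x in lborel. a x = b x"
  shows "AE x in lborel. Sdil a x = Sdil b x"
  using AE_dil[OF a b _ ab, of "1/2"] unfolding Sdil_alt by auto

definition Dil :: "wf \<Rightarrow> wf" where
  "Dil H p = complex_of_real (sqrt 2) * H (2 * p)"

lemma Dil_sq:
  assumes H: "sq_int H" shows "sq_int (Dil H)"
proof -
  have "sq_int (\<lambda>x. H (2 * x))" using dil_sq[OF H] by simp
  then show ?thesis unfolding Dil_def[abs_def] by (rule sq_int_cmult)
qed

lemma Sdil_Dil: "Sdil (Dil H) = H"
  unfolding Sdil_def Dil_def by (auto simp: of_real_mult[symmetric] simp del: of_real_mult)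

lemma nat_half_at_top: "filterlim (\<lambda>n::nat. real n / 2) at_top sequentially"
  unfolding filterlim_at_top
proof
  fix Z :: real
  obtain N :: nat where N: "2 * Z \<le> real N" using real_arch_simple by blast
  show "eventually (\<lambda>n. Z \<le> real n / 2) sequentially"
    unfolding eventually_sequentially
  proof (intro exI allI impI)
    fix n assume "N \<le> n"
    then have "real N \<le> real n" by simp
    then show "Z \<le> real n / 2" using N by simp
  qed
qed

context
  fixes sg h :: real
  assumes hpos: "h > 0" and sg2: "sg\<^sup>2 = 1"
begin

lemma FT_tr_Sdil:
  assumes f: "sq_int f"
  shows "FT sg h (tr R (Sdil f)) p = complex_of_real (sqrt 2) * FT sg h (tr (R / 2) f) (2 * p)"
proof -
  define F where "F x = exp (\<i> * complex_of_real (sg * p * x / h)) * tr R (Sdil f) x" for x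
  have "(CLINT x|lborel. F x) = \<bar>2::real\<bar> *\<^sub>R (CLINT y|lborel. F (0 + 2 * y))"
    by (rule lborel_integral_real_affine) simp
  also have "\<dots> = complex_of_real (sqrt 2) * (CLINT y|lborel. exp (\<i> * complex_of_real (sg * (2 * p) * y / h)) * tr (R / 2) f y)"
  proof -
    have pt: "F (0 + 2 * y) = complex_of_real (1 / sqrt 2) * (exp (\<i> * complex_of_real (sg * (2 * p) * y / h)) * tr (R / 2) f y)" for y
    proof -
      have "indicator {-R..R} (2 * y) = (indicator {-(R/2)..R/2} y :: complex)"
        by (auto simp: indicator_def)
      moreover have "sg * p * (2 * y) / h = sg * (2 * p) * y / h" by simp
      ultimately show ?thesis unfolding F_def tr_def Sdil_def by (simp add: mult_ac)
    qed
    have "\<bar>2::real\<bar> *\<^sub>R (CLINT y|lborel. F (0 + 2 * y))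
        = complex_of_real 2 * (complex_of_real (1 / sqrt 2) * (CLINT y|lborel. exp (\<i> * complex_of_real (sg * (2 * p) * y / h)) * tr (R / 2) f y))"
      unfolding pt by (simp add: scaleR_conv_of_real integral_mult_right_zero)
    also have "complex_of_real 2 * complex_of_real (1 / sqrt 2) = complex_of_real (sqrt 2)"
    proof -
      have "(2::real) * (1 / sqrt 2) = sqrt 2" by (simp add: real_div_sqrt)
      then show ?thesis by (metis of_real_mult)
    qed
    then have "complex_of_real 2 * (complex_of_real (1 / sqrt 2) * X) = complex_of_real (sqrt 2) * X" for X
      by (metis mult.assoc)
    finally show ?thesis .
  qed
  finally show ?thesis unfolding FT_def F_def by simp
qed

lemma plancherel_dil:
  assumes f: "sq_int f"
  shows "AE p in lborel. plancherel sg h (Sdil f) p = Dil (plancherel sg h f) p"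
proof -
  have Sf: "sq_int (Sdil f)" using Sdil_sq[OF f] by blast
  have P: "sq_int (plancherel sg h f)" by (rule plancherel_sq[OF hpos sg2 f])
  have win: "L2conv (\<lambda>n. FT sg h (tr (real n / 2) f)) (plancherel sg h f)"
    by (rule plancherel_window[OF hpos sg2 f nat_half_at_top])
  have conv: "L2conv (\<lambda>n. FT sg h (tr (real n) (Sdil f))) (Dil (plancherel sg h f))"
    unfolding L2conv_def
  proof -
    have "nsq (\<lambda>p. FT sg h (tr (real n) (Sdil f)) p - Dil (plancherel sg h f) p)
        = nsq (\<lambda>p. FT sg h (tr (real n / 2) f) p - plancherel sg h f p)" for n
    proof -
      define G where "G p = FT sg h (tr (real n / 2) f) p - plancherel sg h f p" for p
      have Gs: "sq_int G" unfolding G_def by (intro sq_int_diff FT_tr_sq[OF hpos sg2 f] P)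
      have eqf: "FT sg h (tr (real n) (Sdil f)) p - Dil (plancherel sg h f) p
          = complex_of_real (sqrt 2) * G (2 * p)" for p
        unfolding G_def Dil_def FT_tr_Sdil[OF f] by (auto simp: algebra_simps)
      have "nsq (\<lambda>p. FT sg h (tr (real n) (Sdil f)) p - Dil (plancherel sg h f) p)
          = 2 * nsq (\<lambda>p. G (2 * p))"
        unfolding nsq_def eqf by (simp add: norm_mult power_mult_distrib)
      also have "\<dots> = nsq G" using dil_sq[OF Gs, of 2] by simp
      finally show ?thesis unfolding G_def .
    qed
    then show "(\<lambda>n. nsq (\<lambda>x. FT sg h (tr (real n) (Sdil f)) x - Dil (plancherel sg h f) x)) \<longlonglongrightarrow> 0"
      using win unfolding L2conv_def by simp
  qed
  show ?thesis
  proof (rule L2_unique[where u="\<lambda>n. FT sg h (tr (real n) (Sdil f))"])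
    show "sq_int (FT sg h (tr (real n) (Sdil f)))" for n by (rule FT_tr_sq[OF hpos sg2 Sf])
    show "sq_int (plancherel sg h (Sdil f))" by (rule plancherel_sq[OF hpos sg2 Sf])
    show "sq_int (Dil (plancherel sg h f))" by (rule Dil_sq[OF P])
    show "L2conv (\<lambda>n. FT sg h (tr (real n) (Sdil f))) (plancherel sg h (Sdil f))"
      using plancherel_spec[OF hpos sg2 Sf] by blast
    show "L2conv (\<lambda>n. FT sg h (tr (real n) (Sdil f))) (Dil (plancherel sg h f))" by (rule conv)
  qed
qed

end


definition bm :: "(real \<Rightarrow> complex) \<Rightarrow> bool" where
  "bm g \<longleftrightarrow> g \<in> borel_measurable borel \<and> (\<forall>p. cmod (g p) \<le> 1)"

lemma bm_mult: "sq_int F \<Longrightarrow> bm g \<Longrightarrow> sq_int (\<lambda>p. g p * F p)"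
  unfolding bm_def by (intro sq_int_mult_bdd[where B=1]) auto

lemma AE_sym: "AE x in M. a x = b x \<Longrightarrow> AE x in M. b x = a x"
  by (erule AE_mp) (rule AE_I2, auto)

lemma one_sq: "(1::real)\<^sup>2 = 1" by simp
lemma mone_sq: "(-1::real)\<^sup>2 = 1" by simp

context
  fixes h :: real
  assumes hpos: "h > 0"
begin

lemma U_sq: "sq_int f \<Longrightarrow> sq_int (plancherel (-1) h f)"
  by (rule plancherel_sq[OF hpos mone_sq])

lemma V_sq: "sq_int f \<Longrightarrow> sq_int (plancherel 1 h f)"
  by (rule plancherel_sq[OF hpos one_sq])

lemma mom_sq: "sq_int f \<Longrightarrow> bm g \<Longrightarrow> sq_int (mom_fun h g f)"
  unfolding mom_fun_def by (intro V_sq bm_mult U_sq)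

lemma mom_cong:
  assumes "sq_int f1" "sq_int f2" "AE x in lborel. f1 x = f2 x"
  shows "mom_fun h g f1 = mom_fun h g f2"
  unfolding mom_fun_def using plancherel_cong[OF hpos mone_sq assms] by simp

lemma UV: "sq_int F \<Longrightarrow> AE p in lborel. plancherel (-1) h (plancherel 1 h F) p = F p"
  using plancherel_inv[OF hpos one_sq] by simp

lemma VU: "sq_int F \<Longrightarrow> AE p in lborel. plancherel 1 h (plancherel (-1) h F) p = F p"
  using plancherel_inv[OF hpos mone_sq] by simp

lemma mom_comp:
  assumes f: "sq_int f" and g1: "bm g1" and g2: "bm g2"
  shows "mom_fun h g2 (mom_fun h g1 f) = mom_fun h (\<lambda>p. g2 p * g1 p) f"
proof -
  define X where "X p = g1 p * plancherel (-1) h f p" for p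
  have Xs: "sq_int X" unfolding X_def by (intro bm_mult U_sq f g1)
  have g2m[measurable]: "g2 \<in> borel_measurable borel" using g2 bm_def by auto
  have "AE p in lborel. g2 p * plancherel (-1) h (plancherel 1 h X) p = g2 p * X p"
    using UV[OF Xs] by (rule AE_mp) auto
  then have "plancherel 1 h (\<lambda>p. g2 p * plancherel (-1) h (plancherel 1 h X) p) = plancherel 1 h (\<lambda>p. g2 p * X p)"
    by (intro plancherel_cong[OF hpos one_sq] bm_mult g2 U_sq V_sq Xs)
  moreover have "(\<lambda>p. g2 p * X p) = (\<lambda>p. (g2 p * g1 p) * plancherel (-1) h f p)"
    unfolding X_def by (auto simp: mult_ac)
  ultimately show ?thesis unfolding mom_fun_def X_def[symmetric] by simp
qed

lemma mom_add:
  assumes f: "sq_int f" and g1: "bm g1" and g2: "bm g2"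
  shows "AE x in lborel. mom_fun h g1 f x + mom_fun h g2 f x = mom_fun h (\<lambda>p. g1 p + g2 p) f x"
proof -
  have A: "sq_int (\<lambda>p. g1 p * plancherel (-1) h f p)" by (intro bm_mult U_sq f g1)
  have B: "sq_int (\<lambda>p. g2 p * plancherel (-1) h f p)" by (intro bm_mult U_sq f g2)
  have "AE x in lborel. plancherel 1 h (\<lambda>p. 1 * (g1 p * plancherel (-1) h f p) + 1 * (g2 p * plancherel (-1) h f p)) x
      = 1 * plancherel 1 h (\<lambda>p. g1 p * plancherel (-1) h f p) x + 1 * plancherel 1 h (\<lambda>p. g2 p * plancherel (-1) h f p) x"
    by (rule plancherel_lin[OF hpos one_sq A B])
  moreover have "(\<lambda>p. 1 * (g1 p * plancherel (-1) h f p) + 1 * (g2 p * plancherel (-1) h f p))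
      = (\<lambda>p. (g1 p + g2 p) * plancherel (-1) h f p)" by (auto simp: algebra_simps)
  ultimately have "AE x in lborel. plancherel 1 h (\<lambda>p. (g1 p + g2 p) * plancherel (-1) h f p) x
      = plancherel 1 h (\<lambda>p. g1 p * plancherel (-1) h f p) x + plancherel 1 h (\<lambda>p. g2 p * plancherel (-1) h f p) x"
    by simp
  then show ?thesis unfolding mom_fun_def by (rule AE_sym)
qed

lemma mom_lin:
  assumes f: "sq_int f" and g: "sq_int g" and that: "bm m"
  shows "AE x in lborel. mom_fun h m (\<lambda>y. a * f y + b * g y) x = a * mom_fun h m f x + b * mom_fun h m g x"
proof -
  have Uf: "sq_int (plancherel (-1) h f)" and Ug: "sq_int (plancherel (-1) h g)" using U_sq f g by auto
  have fg: "sq_int (\<lambda>y. a * f y + b * g y)" by (rule sq_int_lin[OF f g])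
  have mm[measurable]: "m \<in> borel_measurable borel" using that bm_def by auto
  have "AE p in lborel. m p * plancherel (-1) h (\<lambda>y. a * f y + b * g y) p
      = a * (m p * plancherel (-1) h f p) + b * (m p * plancherel (-1) h g p)"
    using plancherel_lin[OF hpos mone_sq f g, of a b] by (rule AE_mp) (auto simp: algebra_simps)
  then have "plancherel 1 h (\<lambda>p. m p * plancherel (-1) h (\<lambda>y. a * f y + b * g y) p)
      = plancherel 1 h (\<lambda>p. a * (m p * plancherel (-1) h f p) + b * (m p * plancherel (-1) h g p))"
    by (intro plancherel_cong[OF hpos one_sq] bm_mult U_sq fg that sq_int_lin Uf Ug)
  moreover have "AE x in lborel. plancherel 1 h (\<lambda>p. a * (m p * plancherel (-1) h f p) + b * (m p * plancherel (-1) h g p)) x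
      = a * plancherel 1 h (\<lambda>p. m p * plancherel (-1) h f p) x + b * plancherel 1 h (\<lambda>p. m p * plancherel (-1) h g p) x"
    by (rule plancherel_lin[OF hpos one_sq]) (intro bm_mult Uf Ug that)+
  ultimately show ?thesis unfolding mom_fun_def by simp
qed

lemma mom_iso:
  assumes f: "sq_int f" and gm: "g \<in> borel_measurable borel" and g1: "\<And>p. cmod (g p) = 1"
  shows "nsq (mom_fun h g f) = nsq f"
proof -
  have b: "bm g" unfolding bm_def using gm g1 by auto
  have "nsq (mom_fun h g f) = nsq (\<lambda>p. g p * plancherel (-1) h f p)"
    unfolding mom_fun_def by (rule plancherel_iso[OF hpos one_sq bm_mult[OF U_sq[OF f] b]])
  also have "\<dots> = nsq (plancherel (-1) h f)" unfolding nsq_def by (simp add: norm_mult g1)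
  also have "\<dots> = nsq f" by (rule plancherel_iso[OF hpos mone_sq f])
  finally show ?thesis .
qed

lemma mom_dil:
  assumes f: "sq_int f" and g: "bm g"
  shows "AE x in lborel. mom_fun h g (Sdil f) x = Sdil (mom_fun h (\<lambda>q. g (q / 2)) f) x"
proof -
  have gm[measurable]: "g \<in> borel_measurable borel" using g bm_def by auto
  have Sf: "sq_int (Sdil f)" using Sdil_sq[OF f] by blast
  have Uf: "sq_int (plancherel (-1) h f)" by (rule U_sq[OF f])
  define k where "k q = g (q / 2) * plancherel (-1) h f q" for q
  have bh: "bm (\<lambda>q. g (q / 2))" using g unfolding bm_def by auto
  have ks: "sq_int k" unfolding k_def by (rule bm_mult[OF Uf bh])
  have Dks: "sq_int (Dil k)" by (rule Dil_sq[OF ks])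
  have "AE p in lborel. plancherel (-1) h (Sdil f) p = Dil (plancherel (-1) h f) p"
    by (rule plancherel_dil[OF hpos mone_sq f])
  then have "AE p in lborel. g p * plancherel (-1) h (Sdil f) p = Dil k p"
    by (rule AE_mp) (auto simp: Dil_def k_def mult_ac)
  then have 1: "mom_fun h g (Sdil f) = plancherel 1 h (Dil k)"
    unfolding mom_fun_def by (intro plancherel_cong[OF hpos one_sq] bm_mult U_sq Sf g Dks)
  have "AE p in lborel. plancherel 1 h (Sdil (Dil k)) p = Dil (plancherel 1 h (Dil k)) p"
    by (rule plancherel_dil[OF hpos one_sq Dks])
  then have "AE p in lborel. plancherel 1 h k p = Dil (plancherel 1 h (Dil k)) p"
    unfolding Sdil_Dil .
  then have "AE p in lborel. Sdil (plancherel 1 h k) p = Sdil (Dil (plancherel 1 h (Dil k))) p"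
    by (rule Sdil_AE[rotated 2]) (use V_sq[OF ks] Dil_sq[OF V_sq[OF Dks]] in auto)
  then have L: "AE p in lborel. Sdil (plancherel 1 h k) p = plancherel 1 h (Dil k) p"
    unfolding Sdil_Dil .
  have 2: "mom_fun h (\<lambda>q. g (q / 2)) f = plancherel 1 h k" unfolding mom_fun_def k_def ..
  show ?thesis unfolding 1 2 by (rule AE_sym[OF L])
qed

end


definition ee :: "real \<Rightarrow> real \<Rightarrow> real \<Rightarrow> complex" where
  "ee h s p = exp (\<i> * complex_of_real (s * p / h))"

lemma ee_norm[simp]: "cmod (ee h s p) = 1" unfolding ee_def by simp

lemma ee_meas[measurable]: "ee h s \<in> borel_measurable borel"
  unfolding ee_def[abs_def] by measurable

lemma Ypow_ee: "Ypow h s = mom_fun h (ee h s)"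
  unfolding Ypow_def ee_def[abs_def] ..

lemma Xpow_ee: "Xpow h s = pos_fun (ee h s)"
  unfolding Xpow_def ee_def[abs_def] ..

lemma ee_half: "ee h (-1) (q / 2) = ee h (-1/2) q"
proof -
  have "(-1) * (q / 2) / h = (-1/2) * q / h" by simp
  then show ?thesis unfolding ee_def by simp
qed

lemma bm_ind: "S \<in> sets borel \<Longrightarrow> bm (indicator S)"
  unfolding bm_def by (auto simp: indicator_def)

lemma bm_ee: "bm (ee h s)" unfolding bm_def by simp

lemma bm_ee_ind: "S \<in> sets borel \<Longrightarrow> bm (\<lambda>p. ee h s p * indicator S p)"
  unfolding bm_def by (auto simp: indicator_def norm_mult)

lemma E_not_O: "p \<in> setE \<longleftrightarrow> p \<notin> setO"
  by (simp add: setE_iff setO_iff setL_iff setR_iff)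

lemma L_not_R: "p \<in> setL \<longleftrightarrow> p \<notin> setR"
  by (simp add: setL_iff setR_iff)

definition mM :: "real \<Rightarrow> real \<Rightarrow> complex" where
  "mM h p = indicator setE p + ee h (-1/2) p * indicator setO p"

definition mA :: "real \<Rightarrow> real \<Rightarrow> complex" where
  "mA h x = indicator setL x + ee h (-1) x * indicator setR x"

lemma mM_norm: "cmod (mM h p) = 1"
  unfolding mM_def using E_not_O[of p] by (cases "p \<in> setE") (auto simp: indicator_def)

lemma mA_norm: "cmod (mA h p) = 1"
  unfolding mA_def using L_not_R[of p] by (cases "p \<in> setL") (auto simp: indicator_def)

lemma mM_meas[measurable]: "mM h \<in> borel_measurable borel"
  unfolding mM_def[abs_def] by measurable

lemma mA_meas[measurable]: "mA h \<in> borel_measurable borel"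
  unfolding mA_def[abs_def] by measurable

lemma mM_cnj: "mM h p * cnj (mM h p) = 1"
  using complex_norm_square[of "mM h p"] mM_norm[of h p] by simp

lemma mA_cnj: "mA h p * cnj (mA h p) = 1"
  using complex_norm_square[of "mA h p"] mA_norm[of h p] by simp

lemma bm_mM: "bm (mM h)" unfolding bm_def using mM_norm by simp
lemma bm_cnj_mM: "bm (\<lambda>p. cnj (mM h p))" unfolding bm_def using mM_norm by simp

lemma Aop_eq: "op_add Lp (Xpow h (-1) \<circ> Rp) w = (\<lambda>x. mA h x * w x)"
  unfolding op_add_def Lp_def Rp_def Xpow_ee pos_fun_def mA_def
  by (auto simp: algebra_simps)

lemma A2op_eq: "op_add Epos (Xpow h (-1/2) \<circ> Opos) w = (\<lambda>x. mA h (x / 2) * w x)"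
  unfolding op_add_def Epos_def Opos_def Xpow_ee pos_fun_def mA_def ee_half indL_half indR_half
  by (auto simp: algebra_simps)

lemma Mop_eq: "op_add (Ep h) (Ypow h (-1/2) \<circ> Op h) f = (\<lambda>x. Ep h f x + Ypow h (-1/2) (Op h f) x)"
  unfolding op_add_def by simp

context
  fixes h :: real
  assumes hpos: "h > 0"
begin

lemma Mop_sq:
  assumes f: "sq_int f"
  shows "sq_int (op_add (Ep h) (Ypow h (-1/2) \<circ> Op h) f)"
  unfolding Mop_eq unfolding Ep_def Op_def Ypow_ee
  by (intro sq_int_add mom_sq[OF hpos] bm_ind bm_ee f) auto

lemma Mop_cong:
  assumes f: "sq_int f" and g: "sq_int g" and fg: "AE x in lborel. f x = g x"
  shows "op_add (Ep h) (Ypow h (-1/2) \<circ> Op h) f = op_add (Ep h) (Ypow h (-1/2) \<circ> Op h) g"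
  unfolding Mop_eq unfolding Ep_def Op_def using mom_cong[OF hpos f g fg] by simp

lemma Mop_AE:
  assumes f: "sq_int f"
  shows "AE x in lborel. op_add (Ep h) (Ypow h (-1/2) \<circ> Op h) f x = mom_fun h (mM h) f x"
proof -
  have c: "Ypow h (-1/2) (Op h f) = mom_fun h (\<lambda>p. ee h (-1/2) p * indicator setO p) f"
    unfolding Ypow_ee Op_def by (rule mom_comp[OF hpos f bm_ind bm_ee]) simp
  have "AE x in lborel. mom_fun h (indicator setE) f x + mom_fun h (\<lambda>p. ee h (-1/2) p * indicator setO p) f x
      = mom_fun h (\<lambda>p. indicator setE p + ee h (-1/2) p * indicator setO p) f x"
    by (rule mom_add[OF hpos f bm_ind bm_ee_ind]) auto
  then show ?thesis unfolding Mop_eq unfolding c unfolding Ep_def mM_def[abs_def] .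
qed

lemma Mop_norm:
  assumes f: "sq_int f"
  shows "nsq (op_add (Ep h) (Ypow h (-1/2) \<circ> Op h) f) = nsq f"
proof -
  have "nsq (op_add (Ep h) (Ypow h (-1/2) \<circ> Op h) f) = nsq (mom_fun h (mM h) f)"
    by (rule nsq_cong_AE[OF _ _ Mop_AE[OF f]]) (use Mop_sq[OF f] mom_sq[OF hpos f bm_mM] in auto)
  also have "\<dots> = nsq f" by (rule mom_iso[OF hpos f mM_meas mM_norm])
  finally show ?thesis .
qed

lemma Mop_lin:
  assumes f: "sq_int f" and g: "sq_int g"
  shows "AE x in lborel. op_add (Ep h) (Ypow h (-1/2) \<circ> Op h) (\<lambda>y. a * f y + b * g y) x
    = a * op_add (Ep h) (Ypow h (-1/2) \<circ> Op h) f x + b * op_add (Ep h) (Ypow h (-1/2) \<circ> Op h) g x"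
proof -
  have fg: "sq_int (\<lambda>y. a * f y + b * g y)" by (rule sq_int_lin[OF f g])
  show ?thesis
    using Mop_AE[OF fg] Mop_AE[OF f] Mop_AE[OF g] mom_lin[OF hpos f g bm_mM[of h], of a b]
    by eventually_elim simp
qed

lemma N_Sdil:
  assumes f: "sq_int f"
  shows "AE x in lborel. op_add (Bm h) (Ypow h (-1) \<circ> Tm h) (Sdil f) x = Sdil (op_add (Ep h) (Ypow h (-1/2) \<circ> Op h) f) x"
proof -
  have 1: "AE x in lborel. Bm h (Sdil f) x = Sdil (Ep h f) x"
    using mom_dil[OF hpos f bm_ind[OF setL_sets]] unfolding Bm_def Ep_def indL_half .
  have c1: "Ypow h (-1) (Tm h (Sdil f)) = mom_fun h (\<lambda>p. ee h (-1) p * indicator setR p) (Sdil f)"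
    unfolding Ypow_ee Tm_def by (rule mom_comp[OF hpos _ bm_ind bm_ee]) (use Sdil_sq[OF f] in auto)
  have c2: "Ypow h (-1/2) (Op h f) = mom_fun h (\<lambda>p. ee h (-1/2) p * indicator setO p) f"
    unfolding Ypow_ee Op_def by (rule mom_comp[OF hpos f bm_ind bm_ee]) simp
  have 2: "AE x in lborel. Ypow h (-1) (Tm h (Sdil f)) x = Sdil (Ypow h (-1/2) (Op h f)) x"
    using mom_dil[OF hpos f bm_ee_ind[OF setR_sets, of h "-1"]] unfolding c1 c2 ee_half indR_half .
  show ?thesis using 1 2 unfolding op_add_def Sdil_def
    by eventually_elim (simp add: algebra_simps)
qed

lemma F1_F2:
  assumes f: "sq_int f"
  shows "AE x in lborel. (Sdil \<circ> op_add Lp (Xpow h (-1) \<circ> Rp) \<circ> op_add (Ep h) (Ypow h (-1/2) \<circ> Op h)) f x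
     = (op_add Epos (Xpow h (-1/2) \<circ> Opos) \<circ> op_add (Bm h) (Ypow h (-1) \<circ> Tm h) \<circ> Sdil) f x"
  using N_Sdil[OF f]
  unfolding comp_def[of Sdil] comp_def[of "op_add Epos (Xpow h (-1/2) \<circ> Opos)"] Aop_eq A2op_eq
  by eventually_elim (simp add: Sdil_def)

end


theorem lemma2:
  fixes hbar :: real
  assumes "hbar > 0"
  defines "F1 \<equiv> Sdil \<circ> op_add Lp (Xpow hbar (-1) \<circ> Rp)
                     \<circ> op_add (Ep hbar) (Ypow hbar (-1/2) \<circ> Op hbar)"
      and "F2 \<equiv> op_add Epos (Xpow hbar (-1/2) \<circ> Opos)
                     \<circ> op_add (Bm hbar) (Ypow hbar (-1) \<circ> Tm hbar) \<circ> Sdil"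
  shows "(\<forall>f. sq_int f \<longrightarrow> (AE x in lborel. F1 f x = F2 f x)) \<and> unitary_L2 F1"
proof -
  have hpos: "hbar > 0" by fact
  define M where "M = op_add (Ep hbar) (Ypow hbar (-1/2) \<circ> Op hbar)"
  have F1eq: "F1 f = Sdil (\<lambda>x. mA hbar x * M f x)" for f
  proof -
    have "F1 f = Sdil (op_add Lp (Xpow hbar (-1) \<circ> Rp) (M f))" unfolding F1_def M_def by simp
    then show ?thesis unfolding Aop_eq .
  qed
  have part1: "\<forall>f. sq_int f \<longrightarrow> (AE x in lborel. F1 f x = F2 f x)"
    unfolding F1_def F2_def using F1_F2[OF hpos] by blast
  have Ms: "sq_int (M f)" if "sq_int f" for f unfolding M_def by (rule Mop_sq[OF hpos that])
  have Mm[measurable]: "M f \<in> borel_measurable borel" if "sq_int f" for f using Ms[OF that] by measurable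
  have mAM: "sq_int (\<lambda>x. mA hbar x * M f x)" if "sq_int f" for f
    by (rule sq_int_mult_bdd[where B=1]) (use Ms[OF that] mA_norm in auto)
  have u1: "\<forall>f. sq_int f \<longrightarrow> sq_int (F1 f)"
    unfolding F1eq using Sdil_sq mAM by blast
  have u2: "\<forall>f g. sq_int f \<longrightarrow> sq_int g \<longrightarrow> (AE x in lborel. f x = g x) \<longrightarrow>
        (AE x in lborel. F1 f x = F1 g x)"
  proof (intro allI impI)
    fix f g assume f: "sq_int f" and g: "sq_int g" and fg: "AE x in lborel. f x = g x"
    have "M f = M g" unfolding M_def by (rule Mop_cong[OF hpos f g fg])
    then show "AE x in lborel. F1 f x = F1 g x" unfolding F1eq by simp
  qed
  have u3: "\<forall>f g a b. sq_int f \<longrightarrow> sq_int g \<longrightarrow>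
        (AE x in lborel. F1 (\<lambda>y. a * f y + b * g y) x = a * F1 f x + b * F1 g x)"
  proof (intro allI impI)
    fix f g :: wf and a b :: complex assume f: "sq_int f" and g: "sq_int g"
    have fg: "sq_int (\<lambda>y. a * f y + b * g y)" by (rule sq_int_lin[OF f g])
    have "AE x in lborel. M (\<lambda>y. a * f y + b * g y) x = a * M f x + b * M g x"
      unfolding M_def by (rule Mop_lin[OF hpos f g])
    then have "AE x in lborel. mA hbar x * M (\<lambda>y. a * f y + b * g y) x = mA hbar x * (a * M f x + b * M g x)"
      by (rule AE_mp) auto
    then have "AE x in lborel. Sdil (\<lambda>x. mA hbar x * M (\<lambda>y. a * f y + b * g y) x) x
        = Sdil (\<lambda>x. mA hbar x * (a * M f x + b * M g x)) x"
      by (rule Sdil_AE[rotated 2]) (use Mm[OF fg] Mm[OF f] Mm[OF g] in auto)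
    then show "AE x in lborel. F1 (\<lambda>y. a * f y + b * g y) x = a * F1 f x + b * F1 g x"
      unfolding F1eq by (rule AE_mp) (auto simp: Sdil_def algebra_simps)
  qed
  have u4: "\<forall>f. sq_int f \<longrightarrow> l2norm (F1 f) = l2norm f"
  proof (intro allI impI)
    fix f :: wf assume f: "sq_int f"
    have "nsq (F1 f) = nsq (\<lambda>x. mA hbar x * M f x)" unfolding F1eq using Sdil_sq[OF mAM[OF f]] by simp
    also have "\<dots> = nsq (M f)" unfolding nsq_def by (simp add: norm_mult mA_norm)
    also have "\<dots> = nsq f" unfolding M_def by (rule Mop_norm[OF hpos f])
    finally show "l2norm (F1 f) = l2norm f" unfolding l2norm_nsq by simp
  qed
  have u5: "\<forall>g. sq_int g \<longrightarrow> (\<exists>f. sq_int f \<and> (AE x in lborel. F1 f x = g x))"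
  proof (intro allI impI)
    fix g :: wf assume g: "sq_int g"
    have gm[measurable]: "g \<in> borel_measurable borel" using g by measurable
    define w where "w = Dil g"
    have ws: "sq_int w" unfolding w_def by (rule Dil_sq[OF g])
    define v where "v x = cnj (mA hbar x) * w x" for x
    have vs: "sq_int v" unfolding v_def by (rule sq_int_mult_bdd[where B=1]) (use ws mA_norm in auto)
    define f where "f = mom_fun hbar (\<lambda>p. cnj (mM hbar p)) v"
    have fs: "sq_int f" unfolding f_def by (rule mom_sq[OF hpos vs bm_cnj_mM])
    have "mom_fun hbar (mM hbar) f = mom_fun hbar (\<lambda>p. mM hbar p * cnj (mM hbar p)) v"
      unfolding f_def by (rule mom_comp[OF hpos vs bm_cnj_mM bm_mM])
    also have "\<dots> = plancherel 1 hbar (plancherel (-1) hbar v)"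
      unfolding mom_fun_def mM_cnj by simp
    finally have e1: "mom_fun hbar (mM hbar) f = plancherel 1 hbar (plancherel (-1) hbar v)" .
    have "AE x in lborel. M f x = v x"
      using Mop_AE[OF hpos fs] VU[OF hpos vs] unfolding M_def[symmetric] e1
      by eventually_elim simp
    then have "AE x in lborel. mA hbar x * M f x = w x"
      by (rule AE_mp) (auto simp: v_def mult.assoc[symmetric] mA_cnj)
    then have "AE x in lborel. Sdil (\<lambda>x. mA hbar x * M f x) x = Sdil w x"
      by (rule Sdil_AE[rotated 2]) (use Mm[OF fs] ws in auto)
    then have "AE x in lborel. F1 f x = g x"
      unfolding F1eq w_def Sdil_Dil .
    then show "\<exists>f. sq_int f \<and> (AE x in lborel. F1 f x = g x)" using fs by blast
  qed
  have "unitary_L2 F1" unfolding unitary_L2_def using u1 u2 u3 u4 u5 by blast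
  then show ?thesis using part1 by blast
qed


end
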